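(* Let $p,q\ge 3$ be relatively prime odd integers and let $\omega_j=e^{2\pi i j/p}$. Then $$\sum_{\substack{n=1\\ p\nmid n,\ q\nmid n}}^{pq-1}\frac{\cot(\pi n/p)\cot(\pi n/q)}{\cos^2(\pi n/(pq))}=\frac{2}{3p}(p^2-1)(5q+3)+\frac{32}{p}\sum_{j=1}^{p-1}\frac{\omega_j}{(\omega_j+1)^3(\omega_j^q-1)}-\frac{32q}{p}\sum_{j=1}^{p-1}\frac{\omega_j}{(\omega_j+1)^2(\omega_j^q-1)^2}.$$ *)

theory Defs
  imports "HOL-Analysis.Analysis"
begin

end

theory Submission imports Defs begin


definition rts :: "nat \<Rightarrow> complex set" where "rts m = {z. z ^ m = 1}"

lemma mem_rts[simp]: "z \<in> rts m \<longleftrightarrow> z ^ m = 1" by (simp add: rts_def)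

lemma finite_rts[simp]: "m > 0 \<Longrightarrow> finite (rts m)"
  unfolding rts_def by (rule finite_roots_unity) simp

lemma card_rts: "m > 0 \<Longrightarrow> card (rts m) = m"
  unfolding rts_def by (rule card_roots_unity_eq)

lemma rts_nz: "m > 0 \<Longrightarrow> z \<in> rts m \<Longrightarrow> z \<noteq> 0" by (auto simp: zero_power)

lemma rts_pow_mod: "(z::complex) ^ m = 1 \<Longrightarrow> z ^ j = z ^ (j mod m)"
proof -
  assume h: "z ^ m = 1"
  have "z ^ (m * (j div m)) = 1" by (simp add: power_mult h)
  moreover have "z ^ j = z ^ (m * (j div m)) * z ^ (j mod m)"
    by (metis power_add div_mult_mod_eq mult.commute)
  ultimately show ?thesis by simp
qed

lemma prim_root:
  assumes "m > 0"
  defines "w \<equiv> cis (2 * pi / real m)"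
  shows "w ^ m = 1" and "w ^ j = 1 \<longleftrightarrow> m dvd j"
proof -
  have wk: "w ^ k = cis (2 * pi * real k / real m)" for k
    unfolding w_def Complex.DeMoivre by (rule arg_cong[where f=cis]) simp
  show wm: "w ^ m = 1" unfolding wk using assms by simp
  have inj: "inj_on (\<lambda>k. cis (2 * pi * real k / real m)) {..<m}"
    using Complex.bij_betw_roots_unity[OF assms(1)] by (simp add: bij_betw_def)
  have "w ^ j = 1 \<longleftrightarrow> w ^ (j mod m) = w ^ 0" using rts_pow_mod[OF wm, of j] by simp
  also have "\<dots> \<longleftrightarrow> j mod m = 0"
    using inj_onD[OF inj, of "j mod m" 0] assms unfolding wk by auto
  finally show "w ^ j = 1 \<longleftrightarrow> m dvd j" by (simp add: dvd_eq_mod_eq_0)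
qed

lemma sum_rts_scale:
  assumes "m > 0" "b \<in> rts m"
  shows "(\<Sum>z\<in>rts m. f (b * z)) = (\<Sum>z\<in>rts m. f z)"
proof -
  have b0: "b \<noteq> 0" using assms by (auto simp: zero_power)
  show ?thesis
  proof (rule sum.reindex_bij_witness[where i="\<lambda>z. z / b" and j="\<lambda>z. b * z"])
  show "\<And>a. a \<in> rts m \<Longrightarrow> a / b \<in> rts m" using assms b0 by (simp add: power_divide)
  show "\<And>a. a \<in> rts m \<Longrightarrow> b * a \<in> rts m" using assms by (simp add: power_mult_distrib)
  qed (insert assms b0, auto)
qed

lemma sum_rts_pow:
  assumes "m > 0"
  shows "(\<Sum>z\<in>rts m. z ^ j) = (if m dvd j then of_nat m else 0)"
proof (cases "m dvd j")
  case True
  then obtain k where k: "j = m * k" by blast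
  have "(\<Sum>z\<in>rts m. z ^ j) = (\<Sum>z\<in>rts m. 1)"
    by (rule sum.cong) (auto simp: k power_mult)
  then show ?thesis using True card_rts[OF assms] by simp
next
  case False
  define w where "w = cis (2 * pi / real m)"
  have w: "w ^ m = 1" "w ^ j \<noteq> 1" using prim_root[OF assms] False by (auto simp: w_def)
  have "(\<Sum>z\<in>rts m. z ^ j) = (\<Sum>z\<in>rts m. (w * z) ^ j)"
    using sum_rts_scale[OF assms, of w "\<lambda>z. z ^ j"] w by simp
  also have "\<dots> = w ^ j * (\<Sum>z\<in>rts m. z ^ j)"
    by (simp add: power_mult_distrib sum_distrib_left)
  finally have "(1 - w ^ j) * (\<Sum>z\<in>rts m. z ^ j) = 0" by (simp add: algebra_simps)
  then show ?thesis using w False by simp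
qed



lemma sum_inv_reindex:
  assumes "\<And>z. z \<in> A \<Longrightarrow> inverse z \<in> A"
  shows "(\<Sum>z\<in>A. f (inverse (z::complex))) = (\<Sum>z\<in>A. (f z :: complex))"
  by (rule sum.reindex_bij_witness[where i=inverse and j=inverse]) (auto simp: assms)

lemma rts_inv: "z \<in> rts m \<Longrightarrow> inverse z \<in> rts m"
  by (simp add: power_inverse)

lemma resolvent:
  assumes "m > 0" "x ^ m \<noteq> 1"
  shows "(\<Sum>z\<in>rts m. 1 / (x - z)) = of_nat m * x ^ (m - 1) / (x ^ m - 1)"
proof -
  obtain n where n: "m = Suc n" using assms by (cases m) auto
  have xm: "x ^ m - 1 \<noteq> 0" using assms by simp
  have eq: "1 / (x - z) = (\<Sum>i<m. x ^ i * z ^ (n - i)) / (x ^ m - 1)" if z: "z \<in> rts m" for z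
  proof -
    have "x ^ m - 1 = x ^ m - z ^ m" using z by simp
    also have "\<dots> = (x - z) * (\<Sum>i<m. x ^ i * z ^ (n - i))"
      unfolding n by (rule diff_power_eq_sum)
    finally have h: "x ^ m - 1 = (x - z) * (\<Sum>i<m. x ^ i * z ^ (n - i))" .
    have "x - z \<noteq> 0" using h xm by auto
    then show ?thesis using h xm by (simp add: field_simps)
  qed
  have "(\<Sum>z\<in>rts m. 1 / (x - z)) = (\<Sum>z\<in>rts m. (\<Sum>i<m. x ^ i * z ^ (n - i))) / (x ^ m - 1)"
    by (simp add: eq sum_divide_distrib)
  also have "(\<Sum>z\<in>rts m. (\<Sum>i<m. x ^ i * z ^ (n - i))) = (\<Sum>i<m. x ^ i * (\<Sum>z\<in>rts m. z ^ (n - i)))"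
    by (subst sum.swap) (simp add: sum_distrib_left)
  also have "\<dots> = (\<Sum>i<m. if i = n then of_nat m * x ^ n else 0)"
  proof (rule sum.cong[OF refl])
    fix i assume i: "i \<in> {..<m}"
    have "m dvd (n - i) \<longleftrightarrow> i = n"
    proof
      assume "m dvd (n - i)"
      moreover have "n - i < m" using n by simp
      ultimately have "n - i = 0" using dvd_imp_le by (cases "n - i = 0") auto
      then show "i = n" using i n by simp
    qed simp
    then show "x ^ i * (\<Sum>z\<in>rts m. z ^ (n - i)) = (if i = n then of_nat m * x ^ n else 0)"
      using sum_rts_pow[OF assms(1), of "n - i"] by auto
  qed
  also have "\<dots> = of_nat m * x ^ n" using n by simp
  finally show ?thesis using n by simp
qed

lemma card_rts_minus: "m > 0 \<Longrightarrow> b \<in> rts m \<Longrightarrow> card (rts m - {b}) = m - 1"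
  by (simp add: card_rts)

lemma sum_one_minus:
  assumes "m > 0"
  shows "(\<Sum>z\<in>rts m - {1}. 1 / (1 - z)) = (of_nat m - 1) / 2"
proof -
  let ?A = "rts m - {1}"
  have inv: "inverse z \<in> ?A" if "z \<in> ?A" for z using that by (auto simp: power_inverse)
  have "(\<Sum>z\<in>?A. 1 / (1 - z)) = (\<Sum>z\<in>?A. 1 / (1 - inverse z))"
    using sum_inv_reindex[OF inv, of "\<lambda>z. 1 / (1 - z)"] by simp
  hence "2 * (\<Sum>z\<in>?A. 1 / (1 - z)) = (\<Sum>z\<in>?A. 1 / (1 - z) + 1 / (1 - inverse z))"
    by (simp add: sum.distrib)
  also have "\<dots> = (\<Sum>z\<in>?A. 1)"
  proof (rule sum.cong[OF refl])
    fix z assume z: "z \<in> ?A"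
    hence "z \<noteq> 0" "z \<noteq> 1" using rts_nz[OF assms] by auto
    hence "1 - z \<noteq> 0" "z - 1 \<noteq> 0" by auto
    have "1 / (1 - inverse z) = z / (z - 1)" using \<open>z \<noteq> 0\<close> \<open>z - 1 \<noteq> 0\<close>
      by (simp add: field_simps)
    moreover have "1 / (1 - z) = - (1 / (z - 1))"
      by (metis minus_diff_eq divide_minus_right)
    moreover have "z / (z - 1) = 1 + 1 / (z - 1)" using \<open>z - 1 \<noteq> 0\<close>
      by (simp add: field_simps)
    ultimately show "1 / (1 - z) + 1 / (1 - inverse z) = 1" by simp
  qed
  also have "\<dots> = of_nat m - 1" using assms by (simp add: card_rts of_nat_diff)
  finally show ?thesis by (simp add: field_simps)
qed

lemma sum_b_minus:
  assumes "m > 0" "b \<in> rts m"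
  shows "(\<Sum>z\<in>rts m - {b}. 1 / (b - z)) = (of_nat m - 1) / (2 * b)"
proof -
  have b0: "b \<noteq> 0" using rts_nz[OF assms] .
  have "(\<Sum>z\<in>rts m - {b}. 1 / (b - z)) = (\<Sum>z\<in>rts m - {1}. 1 / (b - b * z))"
  proof (rule sum.reindex_bij_witness[where j="\<lambda>z. z / b" and i="\<lambda>z. b * z"])
  qed (insert assms b0, auto simp: power_divide power_mult_distrib)
  also have "\<dots> = (\<Sum>z\<in>rts m - {1}. 1 / (1 - z) / b)"
  proof (rule sum.cong[OF refl])
    fix z assume "z \<in> rts m - {1}"
    hence "1 - z \<noteq> 0" by auto
    then show "1 / (b - b * z) = 1 / (1 - z) / b" using b0 by (simp add: field_simps)
  qed
  also have "\<dots> = (\<Sum>z\<in>rts m - {1}. 1 / (1 - z)) / b"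
    by (simp add: sum_divide_distrib)
  also have "\<dots> = (of_nat m - 1) / (2 * b)" using sum_one_minus[OF assms(1)] b0 by (simp add: field_simps)
  finally show ?thesis .
qed

lemma odd_rts_not_m1: "odd m \<Longrightarrow> z \<in> rts m \<Longrightarrow> z \<noteq> -1"
  by auto

lemma sum_inv_plus1:
  assumes "odd m"
  shows "(\<Sum>z\<in>rts m. 1 / (z + 1)) = of_nat m / 2"
proof -
  have m0: "m > 0" using assms by (cases m) auto
  have "(\<Sum>z\<in>rts m. 1 / (z + 1)) = (\<Sum>z\<in>rts m. 1 / (inverse z + 1))"
    by (rule sum_inv_reindex[symmetric]) (rule rts_inv)
  hence "2 * (\<Sum>z\<in>rts m. 1 / (z + 1)) = (\<Sum>z\<in>rts m. 1 / (z + 1) + 1 / (inverse z + 1))"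
    by (simp add: sum.distrib)
  also have "\<dots> = (\<Sum>z\<in>rts m. 1)"
  proof (rule sum.cong[OF refl])
    fix z assume z: "z \<in> rts m"
    hence "z \<noteq> 0" "z \<noteq> -1" using rts_nz[OF m0] odd_rts_not_m1[OF assms] by auto
    hence "z \<noteq> 0" "z + 1 \<noteq> 0" by (auto simp: eq_neg_iff_add_eq_0)
    then show "1 / (z + 1) + 1 / (inverse z + 1) = 1"
      by (simp add: field_simps)
  qed
  also have "\<dots> = of_nat m" using m0 by (simp add: card_rts)
  finally show ?thesis by (simp add: field_simps)
qed



lemma double_sum_rts:
  assumes "m > 0"
  shows "(\<Sum>z\<in>rts m. (\<Sum>i<m. a i * z ^ i) * (\<Sum>j<m. b j * z ^ j)) =
         of_nat m * (a 0 * b 0 + (\<Sum>i\<in>{1..<m}. a i * b (m - i)))"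
proof -
  have "(\<Sum>z\<in>rts m. (\<Sum>i<m. a i * z ^ i) * (\<Sum>j<m. b j * z ^ j))
      = (\<Sum>z\<in>rts m. \<Sum>i<m. \<Sum>j<m. a i * b j * z ^ (i + j))"
    by (simp add: sum_product power_add mult_ac)
  also have "\<dots> = (\<Sum>i<m. \<Sum>z\<in>rts m. \<Sum>j<m. a i * b j * z ^ (i + j))"
    by (rule sum.swap)
  also have "\<dots> = (\<Sum>i<m. \<Sum>j<m. \<Sum>z\<in>rts m. a i * b j * z ^ (i + j))"
    by (rule sum.cong[OF refl], rule sum.swap)
  also have "\<dots> = (\<Sum>i<m. \<Sum>j<m. a i * b j * (\<Sum>z\<in>rts m. z ^ (i + j)))"
    by (simp add: sum_distrib_left)
  also have "\<dots> = (\<Sum>i<m. of_nat m * (if i = 0 then a 0 * b 0 else a i * b (m - i)))"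
  proof (rule sum.cong[OF refl])
    fix i assume i: "i \<in> {..<m}"
    define j0 where "j0 = (if i = 0 then 0 else m - i)"
    have dv: "m dvd (i + j) \<longleftrightarrow> j = j0" if "j < m" for j
    proof
      assume d: "m dvd (i + j)"
      have "i + j < 2 * m" using i that by simp
      with d obtain k where k: "i + j = m * k" "k < 2" by (auto elim!: dvdE)
      then have "k = 0 \<or> k = 1" by auto
      then show "j = j0" using k i that by (auto simp: j0_def)
    next
      assume "j = j0" then show "m dvd (i + j)" using i by (auto simp: j0_def)
    qed
    have j0m: "j0 < m" using i assms by (auto simp: j0_def)
    have "(\<Sum>j<m. a i * b j * (\<Sum>z\<in>rts m. z ^ (i + j))) = (\<Sum>j<m. if j = j0 then a i * b j * of_nat m else 0)"
      by (rule sum.cong[OF refl]) (simp add: sum_rts_pow[OF assms] dv)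
    also have "\<dots> = a i * b j0 * of_nat m" using j0m by simp
    finally show "(\<Sum>j<m. a i * b j * (\<Sum>z\<in>rts m. z ^ (i + j))) = of_nat m * (if i = 0 then a 0 * b 0 else a i * b (m - i))"
      by (simp add: j0_def)
  qed
  also have "\<dots> = of_nat m * (\<Sum>i<m. (if i = 0 then a 0 * b 0 else a i * b (m - i)))"
    by (simp add: sum_distrib_left)
  also have "(\<Sum>i<m. (if i = 0 then a 0 * b 0 else a i * b (m - i))) = a 0 * b 0 + (\<Sum>i\<in>{1..<m}. a i * b (m - i))"
  proof -
    have "{..<m} = insert 0 {1..<m}" using assms by auto
    then show ?thesis by (simp add: sum.insert)
  qed
  finally show ?thesis .
qed

lemma inv_plus1_series:
  assumes "odd m" "z \<in> rts m"
  shows "1 / (z + 1) = (\<Sum>k<m. ((-1) ^ k / 2) * z ^ k)"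
proof -
  have "1 - (- z) ^ m = (1 - (- z)) * (\<Sum>k<m. (- z) ^ k)" by (rule one_diff_power_eq)
  moreover have "(- z) ^ m = -1" using assms by (simp add: power_minus_odd)
  moreover have "(\<Sum>k<m. (- z) ^ k) = (\<Sum>k<m. (-1) ^ k * z ^ k)"
    by (rule sum.cong[OF refl]) (rule power_minus)
  ultimately have h: "2 = (z + 1) * (\<Sum>k<m. (-1) ^ k * z ^ k)" by (simp add: add.commute)
  have nz: "z + 1 \<noteq> 0" using odd_rts_not_m1[OF assms] by (metis eq_neg_iff_add_eq_0)
  have e1: "(\<Sum>k<m. ((-1) ^ k / 2) * z ^ k) = (\<Sum>k<m. (-1) ^ k * z ^ k) / 2"
    by (simp add: sum_divide_distrib)
  have e2: "(\<Sum>k<m. (-1) ^ k * z ^ k) = 2 / (z + 1)"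
    using h nz by (simp add: eq_divide_eq mult.commute)
  have nz2: "z * 2 + 2 \<noteq> 0" using nz by (metis distrib_right mult_eq_0_iff mult_1 zero_neq_numeral)
  have e3: "(2::complex) / (z + 1) / 2 = 1 / (z + 1)"
    using nz nz2 by (simp add: field_simps)
  show ?thesis unfolding e1 e2 e3 ..
qed

lemma sum_inv_plus1_sq:
  assumes "odd m"
  shows "(\<Sum>z\<in>rts m. 1 / (z + 1) ^ 2) = of_nat m * (2 - of_nat m) / 4"
proof -
  have m0: "m > 0" using assms by (cases m) auto
  let ?a = "\<lambda>k::nat. ((-1::complex) ^ k / 2)"
  have "(\<Sum>z\<in>rts m. 1 / (z + 1) ^ 2) = (\<Sum>z\<in>rts m. (\<Sum>i<m. ?a i * z ^ i) * (\<Sum>j<m. ?a j * z ^ j))"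
  proof (rule sum.cong[OF refl])
    fix z assume z: "z \<in> rts m"
    have "1 / (z + 1) ^ 2 = (1 / (z + 1)) * (1 / (z + 1))" by (simp add: power2_eq_square)
    also have "\<dots> = (\<Sum>i<m. ?a i * z ^ i) * (\<Sum>j<m. ?a j * z ^ j)"
      unfolding inv_plus1_series[OF assms z] ..
    finally show "1 / (z + 1) ^ 2 = (\<Sum>i<m. ?a i * z ^ i) * (\<Sum>j<m. ?a j * z ^ j)" .
  qed
  also have "\<dots> = of_nat m * (?a 0 * ?a 0 + (\<Sum>i\<in>{1..<m}. ?a i * ?a (m - i)))"
    by (rule double_sum_rts[OF m0])
  also have "(\<Sum>i\<in>{1..<m}. ?a i * ?a (m - i)) = (\<Sum>i\<in>{1..<m}. - 1 / 4)"
  proof (rule sum.cong[OF refl])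
    fix i assume "i \<in> {1..<m}"
    hence "(-1::complex) ^ i * (-1) ^ (m - i) = (-1) ^ m" by (simp add: power_add[symmetric])
    also have "\<dots> = -1" using assms by simp
    finally show "?a i * ?a (m - i) = - 1 / 4" by (simp add: field_simps)
  qed
  also have "\<dots> = - of_nat (m - 1) / 4" by simp
  finally show ?thesis using m0 by (simp add: of_nat_diff field_simps)
qed

lemma k_series_aux:
  fixes z :: complex
  shows "(z - 1) ^ 2 * (\<Sum>k<n. of_nat k * z ^ k) = of_nat n * z ^ (n + 1) - z ^ (n + 1) - of_nat n * z ^ n + z"
proof (induction n)
  case 0 then show ?case by simp
next
  case (Suc n)
  have "(z - 1) ^ 2 * (\<Sum>k<Suc n. of_nat k * z ^ k) = (z - 1) ^ 2 * (\<Sum>k<n. of_nat k * z ^ k) + (z - 1) ^ 2 * (of_nat n * z ^ n)"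
    by (simp add: algebra_simps)
  also have "\<dots> = of_nat (Suc n) * z ^ (Suc n + 1) - z ^ (Suc n + 1) - of_nat (Suc n) * z ^ Suc n + z"
    unfolding Suc.IH by (simp add: algebra_simps power2_eq_square)
  finally show ?case .
qed

lemma k_series:
  assumes "(z::complex) ^ m = 1" "z \<noteq> 1"
  shows "(\<Sum>k<m. of_nat k * z ^ k) = of_nat m / (z - 1)"
proof -
  let ?S = "(\<Sum>k<m. of_nat k * z ^ k)"
  have zz: "z ^ (m + 1) = z" using assms by simp
  have "(z - 1) ^ 2 * ?S = of_nat m * z - z - of_nat m * 1 + z"
    using k_series_aux[of z m] unfolding zz assms(1) .
  also have "\<dots> = (z - 1) * of_nat m" by (simp add: algebra_simps)
  finally have h: "(z - 1) * ((z - 1) * ?S) = (z - 1) * of_nat m" by (simp add: power2_eq_square mult.assoc)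
  have nz: "z - 1 \<noteq> 0" using assms by simp
  with h have "(z - 1) * ?S = of_nat m" by simp
  then show ?thesis using nz by (simp add: eq_divide_eq mult.commute)
qed

lemma sum_i_aux: "(\<Sum>i<n. (of_nat i :: complex)) = of_nat n * (of_nat n - 1) / 2"
  by (induction n) (simp_all add: field_simps)

lemma sum_i_mi_aux: "(\<Sum>i<n. (of_nat i :: complex) * (of_nat n - of_nat i)) = (of_nat n - 1) * of_nat n * (of_nat n + 1) / 6"
proof (induction n)
  case 0 then show ?case by simp
next
  case (Suc n)
  have "(\<Sum>i<Suc n. (of_nat i :: complex) * (of_nat (Suc n) - of_nat i)) = (\<Sum>i<n. (of_nat i :: complex) * (of_nat (Suc n) - of_nat i)) + of_nat n"
    by simp
  also have "(\<Sum>i<n. (of_nat i :: complex) * (of_nat (Suc n) - of_nat i)) = (\<Sum>i<n. of_nat i * (of_nat n - of_nat i) + of_nat i)"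
    by (rule sum.cong) (simp_all add: algebra_simps)
  also have "\<dots> = (\<Sum>i<n. of_nat i * (of_nat n - of_nat i)) + (\<Sum>i<n. of_nat i)"
    by (rule sum.distrib)
  finally have X: "(\<Sum>i<Suc n. (of_nat i :: complex) * (of_nat (Suc n) - of_nat i)) = (\<Sum>i<n. of_nat i * (of_nat n - of_nat i)) + (\<Sum>i<n. of_nat i) + of_nat n" .
  show ?case unfolding X Suc.IH sum_i_aux by (simp add: field_simps)
qed

lemma sum_inv_minus1_sq:
  assumes "m > 0"
  shows "(\<Sum>z\<in>rts m - {1}. 1 / (z - 1) ^ 2) = (of_nat m - 1) * (5 - of_nat m) / 12"
proof -
  let ?a = "\<lambda>k::nat. (of_nat k / of_nat m :: complex)"
  let ?f = "\<lambda>z. (\<Sum>i<m. ?a i * z ^ i) * (\<Sum>j<m. ?a j * z ^ j)"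
  have mz: "(of_nat m :: complex) \<noteq> 0" using assms by simp
  have eq: "1 / (z - 1) ^ 2 = ?f z" if "z \<in> rts m - {1}" for z
  proof -
    have "(\<Sum>i<m. ?a i * z ^ i) = (\<Sum>i<m. of_nat i * z ^ i) / of_nat m"
      by (simp add: sum_divide_distrib)
    also have "\<dots> = 1 / (z - 1)" using k_series[of z m] that mz by simp
    finally show ?thesis by (simp add: power2_eq_square)
  qed
  have "(\<Sum>z\<in>rts m. ?f z) = ?f 1 + (\<Sum>z\<in>rts m - {1}. ?f z)"
    using assms by (subst sum.remove[of _ 1]) auto
  moreover have "(\<Sum>z\<in>rts m. ?f z) = of_nat m * (?a 0 * ?a 0 + (\<Sum>i\<in>{1..<m}. ?a i * ?a (m - i)))"
    by (rule double_sum_rts[OF assms])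
  moreover have "(\<Sum>i\<in>{1..<m}. ?a i * ?a (m - i)) = (\<Sum>i<m. of_nat i * (of_nat m - of_nat i)) / of_nat m ^ 2"
  proof -
    have "(\<Sum>i\<in>{1..<m}. ?a i * ?a (m - i)) = (\<Sum>i\<in>{1..<m}. of_nat i * (of_nat m - of_nat i) / of_nat m ^ 2)"
      by (rule sum.cong[OF refl]) (auto simp: of_nat_diff power2_eq_square)
    also have "\<dots> = (\<Sum>i<m. of_nat i * (of_nat m - of_nat i) / of_nat m ^ 2)"
    proof -
      have "{..<m} = insert 0 {1..<m}" using assms by auto
      then show ?thesis by (simp add: sum.insert)
    qed
    finally show ?thesis by (simp add: sum_divide_distrib)
  qed
  moreover have "?f 1 = ((of_nat m - 1) / 2) ^ 2"
  proof -
    have "(\<Sum>i<m. ?a i * 1 ^ i) = (\<Sum>i<m. of_nat i) / of_nat m" by (simp add: sum_divide_distrib)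
    also have "\<dots> = (of_nat m - 1) / 2" unfolding sum_i_aux using mz by simp
    finally have s1: "(\<Sum>i<m. ?a i * 1 ^ i) = (of_nat m - 1) / 2" .
    show ?thesis by (simp only: s1 power2_eq_square)
  qed
  moreover have "(\<Sum>z\<in>rts m - {1}. ?f z) = (\<Sum>z\<in>rts m - {1}. 1 / (z - 1) ^ 2)"
    by (rule sum.cong[OF refl]) (simp add: eq)
  ultimately have "(\<Sum>z\<in>rts m - {1}. 1 / (z - 1) ^ 2) = of_nat m * (0 + (of_nat m - 1) * of_nat m * (of_nat m + 1) / 6 / of_nat m ^ 2) - ((of_nat m - 1) / 2) ^ 2"
    unfolding sum_i_mi_aux by (simp add: algebra_simps)
  also have "\<dots> = (of_nat m - 1) * (5 - of_nat m) / 12"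
    using mz by (simp add: field_simps power2_eq_square)
  finally show ?thesis .
qed



lemma rts_coprime_one:
  assumes "coprime p q" "p > 0" "(z::complex) ^ p = 1" "z ^ q = 1"
  shows "z = 1"
proof -
  obtain x y where xy: "p * x = q * y + gcd p q" using bezout_nat[of p q] assms(2) by auto
  hence xy: "p * x = q * y + 1" using assms(1) by simp
  have "1 = z ^ (p * x)" by (simp add: power_mult assms(3))
  also have "\<dots> = z" unfolding xy by (simp add: power_add power_mult assms(4))
  finally show ?thesis by simp
qed

lemma pow_perm:
  assumes "coprime p q" "p > 0"
  shows "bij_betw (\<lambda>u. u ^ q) (rts p) (rts p)"
proof -
  have inj: "inj_on (\<lambda>u. u ^ q) (rts p)"
  proof (rule inj_onI)
    fix u w assume u: "u \<in> rts p" and w: "w \<in> rts p" and e: "u ^ q = w ^ q"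
    have w0: "w \<noteq> 0" using rts_nz[OF assms(2) w] .
    have "(u / w) ^ p = 1" using u w by (simp add: power_divide)
    moreover have "(u / w) ^ q = 1" using e w0 by (simp add: power_divide)
    ultimately have "u / w = 1" using rts_coprime_one[OF assms] by blast
    then show "u = w" using w0 by simp
  qed
  have sub: "(\<lambda>u. u ^ q) ` rts p \<subseteq> rts p"
    by (auto simp: power_mult[symmetric] mult.commute) (simp add: power_mult)
  have "(\<lambda>u. u ^ q) ` rts p = rts p" using endo_inj_surj[OF finite_rts[OF assms(2)] sub inj] .
  then show ?thesis using inj by (simp add: bij_betw_def)
qed

lemma crt_bij:
  assumes "coprime p q" "p > 0" "q > 0"
  shows "bij_betw (\<lambda>(u, v). u * v) (rts p \<times> rts q) (rts (p * q))"
proof -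
  have inj: "inj_on (\<lambda>(u, v). u * v) (rts p \<times> rts q)"
  proof (rule inj_onI, clarify)
    fix u v u' v' assume u: "u \<in> rts p" and v: "v \<in> rts q" and u': "u' \<in> rts p"
      and v': "v' \<in> rts q" and e: "u * v = u' * v'"
    have n0: "u' \<noteq> 0" "v \<noteq> 0" using rts_nz assms u' v by blast+
    have e2: "u / u' = v' / v" using e n0 by (simp add: field_simps)
    have "(u / u') ^ p = 1" using u u' by (simp add: power_divide)
    moreover have "(u / u') ^ q = 1" unfolding e2 using v v' by (simp add: power_divide)
    ultimately have "u / u' = 1" using rts_coprime_one[OF assms(1,2)] by blast
    hence "u = u'" using n0 by simp
    moreover from this e n0 have "v = v'" by (simp add: rts_nz[OF assms(2) u'])
    ultimately show "u = u' \<and> v = v'" by simp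
  qed
  have sub: "(\<lambda>(u, v). u * v) ` (rts p \<times> rts q) \<subseteq> rts (p * q)"
  proof clarify
    fix u v assume "u \<in> rts p" "v \<in> rts q"
    then show "u * v \<in> rts (p * q)"
      by (simp add: power_mult_distrib power_mult) (metis power_mult mult.commute power_one)
  qed
  have fin: "finite (rts (p * q))" using assms by simp
  have "card ((\<lambda>(u, v). u * v) ` (rts p \<times> rts q)) = card (rts (p * q))"
    using assms inj by (simp add: card_image card_cartesian_product card_rts)
  hence "(\<lambda>(u, v). u * v) ` (rts p \<times> rts q) = rts (p * q)"
    using card_subset_eq[OF fin sub] by simp
  then show ?thesis using inj by (simp add: bij_betw_def)
qed

lemma cis_sq: "cis (2 * y) = (complex_of_real (cos y) + \<i> * complex_of_real (sin y)) ^ 2"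
proof -
  have "cis (2 * y) = cis y ^ 2" by (simp add: Complex.DeMoivre)
  also have "cis y = complex_of_real (cos y) + \<i> * complex_of_real (sin y)"
    by (simp add: cis.code Complex_eq)
  finally show ?thesis .
qed

lemma cot_cis:
  assumes "cis (2 * y) \<noteq> 1"
  shows "complex_of_real (cot y) = \<i> * (cis (2 * y) + 1) / (cis (2 * y) - 1)"
proof -
  define c where "c = complex_of_real (cos y)"
  define s where "s = complex_of_real (sin y)"
  have cs: "c ^ 2 + s ^ 2 = 1" unfolding c_def s_def
    by (metis of_real_add of_real_1 of_real_power sin_cos_squared_add2)
  have e: "cis (2 * y) = (c + \<i> * s) ^ 2" unfolding c_def s_def by (rule cis_sq)
  have s0: "s \<noteq> 0"
  proof
    assume "s = 0"
    hence "c ^ 2 = 1" using cs by simp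
    hence "cis (2 * y) = 1" using e \<open>s = 0\<close> by simp
    with assms show False by simp
  qed
  have d0: "cis (2 * y) - 1 \<noteq> 0" using assms by simp
  have p1: "cis (2 * y) + 1 = (c + \<i> * s) * (2 * c)"
  proof -
    have "cis (2 * y) + 1 - (c + \<i> * s) * (2 * c) = 1 - (c ^ 2 + s ^ 2)"
      unfolding e by (simp add: algebra_simps power2_eq_square)
    then show ?thesis using cs by simp
  qed
  have p2: "cis (2 * y) - 1 = (c + \<i> * s) * (2 * \<i> * s)"
  proof -
    have "cis (2 * y) - 1 - (c + \<i> * s) * (2 * \<i> * s) = (c ^ 2 + s ^ 2) - 1"
      unfolding e by (simp add: algebra_simps power2_eq_square)
    then show ?thesis using cs by simp
  qed
  have "\<i> * (cis (2 * y) + 1) * s = c * (cis (2 * y) - 1)"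
    unfolding p1 p2 by (simp add: algebra_simps)
  hence "c / s = \<i> * (cis (2 * y) + 1) / (cis (2 * y) - 1)" using s0 d0 by (simp add: field_simps)
  moreover have "complex_of_real (cot y) = c / s" by (simp add: c_def s_def cot_def)
  ultimately show ?thesis by simp
qed

lemma cos2_cis:
  shows "complex_of_real ((cos y) ^ 2) = (cis (2 * y) + 1) ^ 2 / (4 * cis (2 * y))"
proof -
  define c where "c = complex_of_real (cos y)"
  define s where "s = complex_of_real (sin y)"
  have cs: "c ^ 2 + s ^ 2 = 1" unfolding c_def s_def
    by (metis of_real_add of_real_1 of_real_power sin_cos_squared_add2)
  have e: "cis (2 * y) = (c + \<i> * s) ^ 2" unfolding c_def s_def by (rule cis_sq)
  have p1: "cis (2 * y) + 1 = (c + \<i> * s) * (2 * c)"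
  proof -
    have "cis (2 * y) + 1 - (c + \<i> * s) * (2 * c) = 1 - (c ^ 2 + s ^ 2)"
      unfolding e by (simp add: algebra_simps power2_eq_square)
    then show ?thesis using cs by simp
  qed
  have "(cis (2 * y) + 1) ^ 2 = ((c + \<i> * s) * (2 * c)) ^ 2" by (simp only: p1)
  also have "\<dots> = 4 * (c + \<i> * s) ^ 2 * c ^ 2" by (simp add: algebra_simps power2_eq_square)
  finally have "(cis (2 * y) + 1) ^ 2 = 4 * cis (2 * y) * c ^ 2" by (simp only: e)
  moreover have "cis (2 * y) \<noteq> 0" by simp
  ultimately show ?thesis by (simp add: c_def field_simps)
qed



definition Ra :: "complex \<Rightarrow> complex \<Rightarrow> complex" where
  "Ra P a = (let ub = a / (1 - a) in
     (P - 1) * ub / 2 - 2 * a * (P / 2 - a + (P - 1) * ub / 2)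
     + a * (P * (2 - P) / 4 - 2 * a ^ 2 + a * P / 2 + a * (P - 1) * ub / 2))"

definition beta :: "complex \<Rightarrow> complex \<Rightarrow> complex \<Rightarrow> complex" where
  "beta P Q a = 16 / P * Ra P a + 8 * (Q - 1) / P * a * (1 - a) - 2 * P * Q + 4 * P * a
     - 40 * Q / P * a * (1 - a) - 32 / P * a ^ 2 * (1 - a)"

definition alpha :: "complex \<Rightarrow> complex \<Rightarrow> complex \<Rightarrow> complex" where
  "alpha P Q a = 8 / P * Ra P a + 4 * (Q - 1) / P * a * (1 - a) + 2 * P * a
     - 4 * Q * (P + 1) / P * a * (1 - a)"

lemma beta_sym:
  assumes "P \<noteq> 0" "a \<noteq> 0" "a \<noteq> 1"
  shows "beta P Q (1 - a) = beta P Q a"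
proof -
  define t where "t = 1 / (1 - a)"
  define s where "s = 1 / a"
  define v where "v = 1 / P"
  have ht: "t * (1 - a) = 1" using assms by (simp add: t_def)
  have hs: "s * a = 1" using assms by (simp add: s_def)
  have hv: "v * P = 1" using assms by (simp add: v_def)
  have e1: "a / (1 - a) = a * t" by (simp add: t_def)
  have e2: "(1 - a) / (1 - (1 - a)) = (1 - a) * s" by (simp add: s_def)
  have e3: "\<And>x. x / P = x * v" by (simp add: v_def)
  show ?thesis unfolding beta_def Ra_def Let_def e1 e2 e3
    using ht hs hv by algebra
qed

lemma alpha_sym:
  assumes "P \<noteq> 0" "a \<noteq> 0" "a \<noteq> 1"
  shows "alpha P Q a + alpha P Q (1 - a) - beta P Q a = (8 * Q * (4 - P) + 16) / P * a * (1 - a) + 2 * P * Q"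
proof -
  define t where "t = 1 / (1 - a)"
  define s where "s = 1 / a"
  define v where "v = 1 / P"
  have ht: "t * (1 - a) = 1" using assms by (simp add: t_def)
  have hs: "s * a = 1" using assms by (simp add: s_def)
  have hv: "v * P = 1" using assms by (simp add: v_def)
  have e1: "a / (1 - a) = a * t" by (simp add: t_def)
  have e2: "(1 - a) / (1 - (1 - a)) = (1 - a) * s" by (simp add: s_def)
  have e3: "\<And>x. x / P = x * v" by (simp add: v_def)
  show ?thesis unfolding alpha_def beta_def Ra_def Let_def e1 e2 e3
    using ht hs hv by algebra
qed



definition cc :: "complex \<Rightarrow> complex" where "cc z = z ^ 2 / (z + 1) ^ 2"
definition gg :: "complex \<Rightarrow> complex" where "gg U = (U + 1) / (U - 1)"
definition Psi :: "nat \<Rightarrow> complex \<Rightarrow> complex" where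
  "Psi p z = (z ^ p + 1) / (z ^ p - 1) * (4 * z / (z + 1) ^ 2)"

lemma sum_zeta_over:
  assumes "p > 0" "z ^ p \<noteq> 1"
  shows "(\<Sum>w\<in>rts p. w / (z - w)) = of_nat p / (z ^ p - 1)"
proof -
  have zw: "z - w \<noteq> 0" if "w \<in> rts p" for w using that assms by auto
  have "(\<Sum>w\<in>rts p. w / (z - w)) = (\<Sum>w\<in>rts p. z * (1 / (z - w)) - 1)"
    by (rule sum.cong[OF refl]) (use zw in \<open>simp add: field_simps\<close>)
  also have "\<dots> = z * (\<Sum>w\<in>rts p. 1 / (z - w)) - (\<Sum>w\<in>rts p. 1)"
    by (simp only: sum_subtractf sum_distrib_left[symmetric])
  also have "\<dots> = z * (of_nat p * z ^ (p - 1) / (z ^ p - 1)) - of_nat p"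
    unfolding resolvent[OF assms] using card_rts[OF assms(1)] by simp
  also have "z * z ^ (p - 1) = z ^ p" using assms by (simp add: power_Suc[symmetric])
  hence "z * (of_nat p * z ^ (p - 1) / (z ^ p - 1)) - of_nat p = of_nat p * z ^ p / (z ^ p - 1) - of_nat p"
    by (simp add: algebra_simps)
  also have "\<dots> = of_nat p / (z ^ p - 1)" using assms by (simp add: field_simps)
  finally show ?thesis .
qed

lemma sum_cc:
  assumes "odd p"
  shows "(\<Sum>w\<in>rts p. cc w) = of_nat p * (2 - of_nat p) / 4"
proof -
  have p0: "p > 0" using assms by (cases p) auto
  have "(\<Sum>w\<in>rts p. cc w) = (\<Sum>w\<in>rts p. 1 - 2 * (1 / (w + 1)) + 1 / (w + 1) ^ 2)"
  proof (rule sum.cong[OF refl])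
    fix w assume w: "w \<in> rts p"
    have "w + 1 \<noteq> 0" using odd_rts_not_m1[OF assms w] by (metis eq_neg_iff_add_eq_0)
    define i1 where "i1 = 1 / (w + 1)"
    have h1: "i1 * (w + 1) = 1" using \<open>w + 1 \<noteq> 0\<close> by (simp add: i1_def)
    have "w ^ 2 * i1 ^ 2 = 1 - 2 * i1 + i1 ^ 2" using h1 by algebra
    then show "cc w = 1 - 2 * (1 / (w + 1)) + 1 / (w + 1) ^ 2"
      by (simp add: cc_def i1_def power2_eq_square)
  qed
  also have "\<dots> = (\<Sum>w\<in>rts p. 1) - 2 * (\<Sum>w\<in>rts p. 1 / (w + 1)) + (\<Sum>w\<in>rts p. 1 / (w + 1) ^ 2)"
    by (simp only: sum.distrib sum_subtractf sum_distrib_left)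
  also have "\<dots> = of_nat p - 2 * (of_nat p / 2) + of_nat p * (2 - of_nat p) / 4"
    unfolding sum_inv_plus1[OF assms] sum_inv_plus1_sq[OF assms] using p0 by (simp add: card_rts)
  finally show ?thesis by simp
qed

lemma sum_w_over_w1:
  assumes "odd p"
  shows "(\<Sum>w\<in>rts p. w / (1 + w)) = of_nat p / 2"
proof -
  have p0: "p > 0" using assms by (cases p) auto
  have "(\<Sum>w\<in>rts p. w / (1 + w)) = (\<Sum>w\<in>rts p. 1 - 1 / (w + 1))"
  proof (rule sum.cong[OF refl])
    fix w assume w: "w \<in> rts p"
    have "w + 1 \<noteq> 0" using odd_rts_not_m1[OF assms w] by (metis eq_neg_iff_add_eq_0)
    then show "w / (1 + w) = 1 - 1 / (w + 1)" by (simp add: field_simps)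
  qed
  also have "\<dots> = (\<Sum>w\<in>rts p. 1) - (\<Sum>w\<in>rts p. 1 / (w + 1))"
    by (simp only: sum_subtractf)
  also have "\<dots> = of_nat p - of_nat p / 2"
    unfolding sum_inv_plus1[OF assms] using p0 by (simp add: card_rts)
  finally show ?thesis by simp
qed

lemma Psi_pf:
  assumes "odd p" "z ^ p \<noteq> 1" "z \<noteq> -1"
  shows "Psi p z = 8 / of_nat p * (\<Sum>w\<in>rts p. cc w / (z - w)) + 2 * of_nat p / (z + 1)"
proof -
  have p0: "p > 0" using assms by (cases p) auto
  have z1: "z + 1 \<noteq> 0" using assms(3) by (metis eq_neg_iff_add_eq_0)
  have pf: "cc w / (z - w) = w * z / ((z - w) * (z + 1) ^ 2) + cc w / (z + 1) - w / (1 + w) / (z + 1) ^ 2"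
    if w: "w \<in> rts p" for w
  proof -
    have w1: "w + 1 \<noteq> 0" using odd_rts_not_m1[OF assms(1) w] by (metis eq_neg_iff_add_eq_0)
    have zw: "z - w \<noteq> 0" using w assms by auto
    define i1 where "i1 = 1 / (w + 1)"
    define i2 where "i2 = 1 / (z + 1)"
    define i3 where "i3 = 1 / (z - w)"
    have h1: "i1 * (w + 1) = 1" using w1 by (simp add: i1_def)
    have h2: "i2 * (z + 1) = 1" using z1 by (simp add: i2_def)
    have h3: "i3 * (z - w) = 1" using zw by (simp add: i3_def)
    have "cc w / (z - w) = w ^ 2 * i1 ^ 2 * i3" by (simp add: cc_def i1_def i3_def power2_eq_square)
    moreover have "w * z / ((z - w) * (z + 1) ^ 2) + cc w / (z + 1) - w / (1 + w) / (z + 1) ^ 2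
       = w * z * i3 * i2 ^ 2 + w ^ 2 * i1 ^ 2 * i2 - w * i1 * i2 ^ 2"
      by (simp add: cc_def i1_def i2_def i3_def power2_eq_square add.commute)
    moreover have "w ^ 2 * i1 ^ 2 * i3 = w * z * i3 * i2 ^ 2 + w ^ 2 * i1 ^ 2 * i2 - w * i1 * i2 ^ 2"
      using h1 h2 h3 by algebra
    ultimately show ?thesis by simp
  qed
  have "(\<Sum>w\<in>rts p. cc w / (z - w)) =
      z / (z + 1) ^ 2 * (\<Sum>w\<in>rts p. w / (z - w)) + (\<Sum>w\<in>rts p. cc w) / (z + 1)
      - (\<Sum>w\<in>rts p. w / (1 + w)) / (z + 1) ^ 2"
    by (simp add: pf sum.distrib sum_subtractf sum_distrib_left sum_divide_distrib mult_ac)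
  also have "\<dots> = z / (z + 1) ^ 2 * (of_nat p / (z ^ p - 1)) + of_nat p * (2 - of_nat p) / 4 / (z + 1)
      - of_nat p / 2 / (z + 1) ^ 2"
    using assms p0 by (simp add: sum_zeta_over sum_cc sum_w_over_w1)
  finally have S: "(\<Sum>w\<in>rts p. cc w / (z - w)) = \<dots>" .
  define X where "X = z ^ p"
  define iX where "iX = 1 / (X - 1)"
  define i2 where "i2 = 1 / (z + 1)"
  define iP where "iP = 1 / (of_nat p :: complex)"
  have hX: "iX * (X - 1) = 1" using assms by (simp add: iX_def X_def)
  have h2: "i2 * (z + 1) = 1" using z1 by (simp add: i2_def)
  have hP: "iP * of_nat p = 1" using p0 by (simp add: iP_def)
  have L: "Psi p z = (X + 1) * iX * (4 * z * i2 ^ 2)"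
    by (simp add: Psi_def X_def iX_def i2_def power2_eq_square)
  have R: "8 / of_nat p * (z / (z + 1) ^ 2 * (of_nat p / (z ^ p - 1)) + of_nat p * (2 - of_nat p) / 4 / (z + 1)
      - of_nat p / 2 / (z + 1) ^ 2) + 2 * of_nat p / (z + 1)
     = 8 * iP * (z * i2 ^ 2 * (of_nat p * iX) + of_nat p * (2 - of_nat p) / 4 * i2 - of_nat p / 2 * i2 ^ 2)
       + 2 * of_nat p * i2"
    by (simp add: X_def iX_def i2_def iP_def power2_eq_square)
  have "(X + 1) * iX * (4 * z * i2 ^ 2) = 8 * iP * (z * i2 ^ 2 * (of_nat p * iX) + of_nat p * (2 - of_nat p) / 4 * i2 - of_nat p / 2 * i2 ^ 2)
       + 2 * of_nat p * i2"
    using hX h2 hP by algebra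
  then show ?thesis unfolding S L R .
qed



lemma Tgen_alg:
  fixes iu u I1 Uk D1 D2 Zn z Q :: complex
  assumes "iu * u = 1" "I1 * Uk = 1" "D1 * (z * Zn * (iu * I1) - 1) = 1" "D2 * (z * Zn - u * Uk) = 1"
  shows "- iu * (Q * (Zn * I1) * D1) = - Q * Zn * D2"
  using assms by algebra

lemma Tgen:
  assumes "q > 0" "u \<noteq> 0" "z ^ q \<noteq> u ^ q"
  shows "(\<Sum>v\<in>rts q. 1 / (u * v - z)) = - of_nat q * z ^ (q - 1) / (z ^ q - u ^ q)"
proof -
  define x where "x = z / u"
  have xq: "x ^ q \<noteq> 1" using assms by (simp add: x_def power_divide)
  have "(\<Sum>v\<in>rts q. 1 / (u * v - z)) = (\<Sum>v\<in>rts q. - (1 / u) * (1 / (x - v)))"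
  proof (rule sum.cong[OF refl])
    fix v assume "v \<in> rts q"
    show "1 / (u * v - z) = - (1 / u) * (1 / (x - v))"
      using assms(2) by (simp add: x_def field_simps) (simp add: divide_simps algebra_simps)
  qed
  also have "\<dots> = - (1 / u) * (of_nat q * x ^ (q - 1) / (x ^ q - 1))"
    by (simp only: sum_distrib_left[symmetric] resolvent[OF assms(1) xq])
  also have "\<dots> = - of_nat q * z ^ (q - 1) / (z ^ q - u ^ q)"
  proof -
    obtain n where n: "q = Suc n" using assms by (cases q) auto
    define iu where "iu = 1 / u"
    define I1 where "I1 = 1 / u ^ n"
    define D1 where "D1 = 1 / ((z * iu) ^ Suc n - 1)"
    define D2 where "D2 = 1 / (z * z ^ n - u * u ^ n)"
    have h1: "iu * u = 1" using assms by (simp add: iu_def)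
    have h2: "I1 * u ^ n = 1" using assms by (simp add: I1_def)
    have xx: "x = z * iu" by (simp add: x_def iu_def)
    have h3: "D1 * ((z * iu) ^ Suc n - 1) = 1" using xq n by (simp add: D1_def xx)
    have h4: "D2 * (z * z ^ n - u * u ^ n) = 1" using assms n by (simp add: D2_def)
    have iun: "iu ^ n = I1" by (simp add: iu_def I1_def power_one_over)
    have x1: "x ^ (q - 1) = z ^ n * I1" by (simp add: xx n power_mult_distrib iun)
    have x2: "x ^ q - 1 = (z * iu) ^ Suc n - 1" by (simp add: xx n)
    have L: "- (1 / u) * (of_nat q * x ^ (q - 1) / (x ^ q - 1)) = - iu * (of_nat q * (z ^ n * I1) * D1)"
      unfolding x1 x2 by (simp add: D1_def iu_def)
    have R: "- of_nat q * z ^ (q - 1) / (z ^ q - u ^ q) = - of_nat q * z ^ n * D2"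
      by (simp add: n D2_def)
    have E1: "(z * iu) ^ Suc n = z * z ^ n * (iu * I1)" by (simp add: power_mult_distrib iun)
    have "- iu * (of_nat q * (z ^ n * I1) * D1) = - of_nat q * z ^ n * D2"
      using h1 h2 h3 h4 unfolding E1 by (rule Tgen_alg)
    then show ?thesis unfolding L R .
  qed
  finally show ?thesis .
qed

lemma sum_minus_pt:
  assumes "finite A" "b \<in> A"
  shows "(\<Sum>x\<in>A - {b}. f x) = (\<Sum>x\<in>A. f x) - (f b :: complex)"
  using sum.remove[OF assms, of f] by simp

lemma pow_neq:
  assumes "coprime p q" "p > 0" "u \<in> rts p" "w \<in> rts p" "u \<noteq> w"
  shows "w ^ q \<noteq> u ^ q"
  using pow_perm[OF assms(1,2)] assms(3-5) unfolding bij_betw_def inj_on_def by metis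

lemma Tsum:
  assumes "coprime p q" "p > 0" "q > 0" "u \<in> rts p" "w \<in> rts p"
  shows "(\<Sum>v\<in>rts q - {1}. 1 / (u * v - w)) =
    (if w = u then - (of_nat q - 1) / (2 * u) else - of_nat q * w ^ (q - 1) / (w ^ q - u ^ q) - 1 / (u - w))"
proof (cases "w = u")
  case True
  have u0: "u \<noteq> 0" using rts_nz[OF assms(2,4)] .
  have "(\<Sum>v\<in>rts q - {1}. 1 / (u * v - w)) = (\<Sum>v\<in>rts q - {1}. - (1 / u) * (1 / (1 - v)))"
  proof (rule sum.cong[OF refl])
    fix v assume v: "v \<in> rts q - {1}"
    hence "1 - v \<noteq> 0" by auto
    then show "1 / (u * v - w) = - (1 / u) * (1 / (1 - v))" using True u0
      by (simp add: field_simps)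
  qed
  also have "\<dots> = - (1 / u) * ((of_nat q - 1) / 2)"
    by (simp only: sum_distrib_left[symmetric] sum_one_minus[OF assms(3)])
  finally show ?thesis using True u0 by (simp add: field_simps)
next
  case False
  have u0: "u \<noteq> 0" using rts_nz[OF assms(2,4)] .
  have ne: "w ^ q \<noteq> u ^ q" using pow_neq[OF assms(1,2,4,5)] False by auto
  have "(\<Sum>v\<in>rts q - {1}. 1 / (u * v - w)) = (\<Sum>v\<in>rts q. 1 / (u * v - w)) - 1 / (u * 1 - w)"
    using assms(3) by (simp add: sum_minus_pt)
  also have "\<dots> = - of_nat q * w ^ (q - 1) / (w ^ q - u ^ q) - 1 / (u - w)"
    by (simp add: Tgen[OF assms(3) u0 ne])
  finally show ?thesis using False by simp
qed

lemma uq_neq_m1: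
  assumes "odd p" "u \<in> rts p"
  shows "u ^ q \<noteq> -1"
proof
  assume h: "u ^ q = -1"
  have "(u ^ q) ^ p = (u ^ p) ^ q" by (simp add: power_mult[symmetric] mult.commute)
  hence "(-1::complex) ^ p = 1" using h assms(2) by simp
  with assms(1) show False by simp
qed

lemma Tm1:
  assumes "odd p" "odd q" "u \<in> rts p"
  shows "(\<Sum>v\<in>rts q - {1}. 1 / (u * v + 1)) = of_nat q / (1 + u ^ q) - 1 / (u + 1)"
proof -
  have q0: "q > 0" using assms by (cases q) auto
  have p0: "p > 0" using assms by (cases p) auto
  have u0: "u \<noteq> 0" using rts_nz[OF p0 assms(3)] .
  have ne: "(-1) ^ q \<noteq> u ^ q" using uq_neq_m1[OF assms(1,3), of q] assms(2) by simp
  have "(\<Sum>v\<in>rts q - {1}. 1 / (u * v + 1)) = (\<Sum>v\<in>rts q. 1 / (u * v - (-1))) - 1 / (u * 1 - (-1))"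
    using q0 by (simp add: sum_minus_pt)
  also have "\<dots> = - of_nat q * (-1) ^ (q - 1) / ((-1) ^ q - u ^ q) - 1 / (u + 1)"
    by (simp only: Tgen[OF q0 u0 ne]) simp
  also have "(-1::complex) ^ (q - 1) = 1" using assms(2) q0 by (simp add: neg_one_even_power)
  also have "(-1::complex) ^ q = -1" using assms(2) by simp
  finally have X: "(\<Sum>v\<in>rts q - {1}. 1 / (u * v + 1)) = - of_nat q * 1 / (- 1 - u ^ q) - 1 / (u + 1)" .
  have e1: "(-1::complex) - u ^ q = - (1 + u ^ q)" by simp
  have e2: "- of_nat q * 1 / (- 1 - u ^ q) = of_nat q / (1 + u ^ q)"
    unfolding e1 by (simp only: divide_minus_right mult_1_right mult_minus_left minus_divide_left minus_minus)
  show ?thesis unfolding X e2 ..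
qed

definition Rf :: "complex \<Rightarrow> complex \<Rightarrow> complex" where
  "Rf P u = (let a = 1 / (u + 1) in (1 - a) ^ 2 * (P - 1) / (2 * u) + (a ^ 2 - 2 * a) * (P / 2 - a)
     + a * (P * (2 - P) / 4 - a ^ 2))"

lemma Rf_alg:
  fixes z u a i1 d :: complex
  assumes "i1 * (z + 1) = 1" "d * (u - z) = 1" "a * (u + 1) = 1"
  shows "z ^ 2 * i1 ^ 2 * d = (1 - a) ^ 2 * d + (a ^ 2 - 2 * a) * i1 + a * i1 ^ 2"
  using assms by algebra

lemma Rclosed:
  assumes "odd p" "u \<in> rts p"
  shows "(\<Sum>w\<in>rts p - {u}. cc w / (u - w)) = Rf (of_nat p) u"
proof -
  have p0: "p > 0" using assms by (cases p) auto
  have u1: "u + 1 \<noteq> 0" using odd_rts_not_m1[OF assms] by (metis eq_neg_iff_add_eq_0)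
  define a where "a = 1 / (u + 1)"
  have ha: "a * (u + 1) = 1" using u1 by (simp add: a_def)
  have pt: "cc w / (u - w) = (1 - a) ^ 2 * (1 / (u - w)) + (a ^ 2 - 2 * a) * (1 / (w + 1)) + a * (1 / (w + 1) ^ 2)"
    if w: "w \<in> rts p - {u}" for w
  proof -
    have w1: "w + 1 \<noteq> 0" using odd_rts_not_m1[OF assms(1)] w by (metis DiffE eq_neg_iff_add_eq_0)
    have uw: "u - w \<noteq> 0" using w by auto
    have "cc w / (u - w) = w ^ 2 * (1 / (w + 1)) ^ 2 * (1 / (u - w))" by (simp add: cc_def power2_eq_square)
    also have "\<dots> = (1 - a) ^ 2 * (1 / (u - w)) + (a ^ 2 - 2 * a) * (1 / (w + 1)) + a * (1 / (w + 1)) ^ 2"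
      by (rule Rf_alg) (use w1 uw ha in auto)
    finally show ?thesis by (simp add: power_one_over)
  qed
  have "(\<Sum>w\<in>rts p - {u}. cc w / (u - w)) = (1 - a) ^ 2 * (\<Sum>w\<in>rts p - {u}. 1 / (u - w))
      + (a ^ 2 - 2 * a) * (\<Sum>w\<in>rts p - {u}. 1 / (w + 1)) + a * (\<Sum>w\<in>rts p - {u}. 1 / (w + 1) ^ 2)"
    by (simp only: pt sum.distrib sum_distrib_left cong: sum.cong)
  also have "(\<Sum>w\<in>rts p - {u}. 1 / (u - w)) = (of_nat p - 1) / (2 * u)"
    by (rule sum_b_minus[OF p0 assms(2)])
  also have "(\<Sum>w\<in>rts p - {u}. 1 / (w + 1)) = of_nat p / 2 - a"
    using p0 assms by (simp add: sum_minus_pt sum_inv_plus1 a_def)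
  also have "(\<Sum>w\<in>rts p - {u}. 1 / (w + 1) ^ 2) = of_nat p * (2 - of_nat p) / 4 - a ^ 2"
    using p0 assms by (simp add: sum_minus_pt sum_inv_plus1_sq a_def power_one_over)
  finally show ?thesis by (simp add: Rf_def a_def[symmetric] Let_def)
qed



definition Dq :: "nat \<Rightarrow> nat \<Rightarrow> complex \<Rightarrow> complex" where
  "Dq p q u = (\<Sum>w\<in>rts p - {u}. cc w * (- of_nat q * w ^ (q - 1) / (w ^ q - u ^ q)))"

lemma Jlemma:
  assumes "odd p" "odd q" "coprime p q" "u \<in> rts p"
  shows "(\<Sum>v\<in>rts q - {1}. Psi p (u * v)) =
    8 / of_nat p * (Dq p q u - Rf (of_nat p) u + cc u * (- (of_nat q - 1) / (2 * u)))
    + 2 * of_nat p * (of_nat q / (1 + u ^ q) - 1 / (u + 1))"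
proof -
  have p0: "p > 0" using assms by (cases p) auto
  have q0: "q > 0" using assms by (cases q) auto
  have cqp: "coprime q p" using assms(3) by (simp add: coprime_commute)
  have pt: "Psi p (u * v) = 8 / of_nat p * (\<Sum>w\<in>rts p. cc w * (1 / (u * v - w))) + 2 * of_nat p * (1 / (u * v + 1))"
    if v: "v \<in> rts q - {1}" for v
  proof -
    have vp: "v ^ p \<noteq> 1" using rts_coprime_one[OF cqp q0, of v] v by auto
    have uvp: "(u * v) ^ p = v ^ p" using assms(4) by (simp add: power_mult_distrib)
    have nm1: "u * v \<noteq> -1"
    proof
      assume h: "u * v = -1"
      hence "v ^ p = -1" using uvp assms(1) by simp
      hence "(v ^ p) ^ q = -1" using assms(2) by simp
      moreover have "(v ^ p) ^ q = (v ^ q) ^ p" by (metis power_mult mult.commute)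
      hence "(v ^ p) ^ q = 1" using v by simp
      ultimately show False by simp
    qed
    show ?thesis using Psi_pf[OF assms(1) _ nm1] vp uvp by simp
  qed
  have "(\<Sum>v\<in>rts q - {1}. Psi p (u * v)) =
      8 / of_nat p * (\<Sum>w\<in>rts p. cc w * (\<Sum>v\<in>rts q - {1}. 1 / (u * v - w)))
      + 2 * of_nat p * (\<Sum>v\<in>rts q - {1}. 1 / (u * v + 1))"
  proof -
    have sw: "(\<Sum>v\<in>rts q - {1}. \<Sum>w\<in>rts p. cc w * (1 / (u * v - w))) = (\<Sum>w\<in>rts p. cc w * (\<Sum>v\<in>rts q - {1}. 1 / (u * v - w)))"
      by (subst sum.swap) (simp only: sum_distrib_left)
    show ?thesis
      by (simp only: pt sum.distrib sum_distrib_left[symmetric] sw cong: sum.cong)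
  qed
  also have "(\<Sum>v\<in>rts q - {1}. 1 / (u * v + 1)) = of_nat q / (1 + u ^ q) - 1 / (u + 1)"
    by (rule Tm1[OF assms(1,2,4)])
  also have "(\<Sum>w\<in>rts p. cc w * (\<Sum>v\<in>rts q - {1}. 1 / (u * v - w))) =
      cc u * (- (of_nat q - 1) / (2 * u)) + (\<Sum>w\<in>rts p - {u}. cc w * (- of_nat q * w ^ (q - 1) / (w ^ q - u ^ q) - 1 / (u - w)))"
  proof -
    have "(\<Sum>w\<in>rts p. cc w * (\<Sum>v\<in>rts q - {1}. 1 / (u * v - w))) =
        cc u * (\<Sum>v\<in>rts q - {1}. 1 / (u * v - u)) + (\<Sum>w\<in>rts p - {u}. cc w * (\<Sum>v\<in>rts q - {1}. 1 / (u * v - w)))"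
      using p0 assms(4) by (simp add: sum.remove)
    also have "(\<Sum>v\<in>rts q - {1}. 1 / (u * v - u)) = - (of_nat q - 1) / (2 * u)"
      using Tsum[OF assms(3) p0 q0 assms(4) assms(4)] by simp
    also have "(\<Sum>w\<in>rts p - {u}. cc w * (\<Sum>v\<in>rts q - {1}. 1 / (u * v - w))) =
        (\<Sum>w\<in>rts p - {u}. cc w * (- of_nat q * w ^ (q - 1) / (w ^ q - u ^ q) - 1 / (u - w)))"
      by (rule sum.cong[OF refl]) (use Tsum[OF assms(3) p0 q0 assms(4)] in auto)
    finally show ?thesis .
  qed
  also have "(\<Sum>w\<in>rts p - {u}. cc w * (- of_nat q * w ^ (q - 1) / (w ^ q - u ^ q) - 1 / (u - w)))
      = Dq p q u - Rf (of_nat p) u"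
    unfolding Dq_def Rclosed[OF assms(1,4), symmetric]
    by (simp add: right_diff_distrib sum_subtractf)
  finally show ?thesis by (simp add: algebra_simps)
qed



definition Yc :: "complex \<Rightarrow> complex \<Rightarrow> complex" where
  "Yc P B = (if B = 1 then (P - 1) / 2 - (P - 1) * (5 - P) / 6
     else 2 / (B - 1) * (- (P - 1) / 2 - 1 / (B - 1)) + (B + 1) / (B - 1) * ((P - 1) / (2 * B) - 1 / (B - 1)))"

lemma sum_U_minus1:
  assumes "p > 0"
  shows "(\<Sum>U\<in>rts p - {1}. 1 / (U - 1)) = - (of_nat p - 1) / 2"
proof -
  have "(\<Sum>U\<in>rts p - {1}. 1 / (U - 1)) = (\<Sum>U\<in>rts p - {1}. - (1 / (1 - U)))"
    by (rule sum.cong[OF refl]) (simp add: divide_minus_right[symmetric])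
  also have "\<dots> = - ((of_nat p - 1) / 2)" by (simp only: sum_negf sum_one_minus[OF assms])
  finally show ?thesis by (simp only: minus_divide_left)
qed

lemma Y_closed:
  assumes "p > 0" "B \<in> rts p"
  shows "(\<Sum>U\<in>rts p - {1} - {B}. gg U / (B - U)) = Yc (of_nat p) B"
proof (cases "B = 1")
  case True
  have "(\<Sum>U\<in>rts p - {1} - {B}. gg U / (B - U)) = (\<Sum>U\<in>rts p - {1}. - (1 / (U - 1)) - 2 * (1 / (U - 1) ^ 2))"
  proof (rule sum.cong)
    show "rts p - {1} - {B} = rts p - {1}" using True by auto
  next
    fix U assume "U \<in> rts p - {1}"
    hence U1: "U - 1 \<noteq> 0" by auto
    define i where "i = 1 / (U - 1)"
    have hi: "i * (U - 1) = 1" using U1 by (simp add: i_def)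
    have "(U + 1) * i * (- i) = - i - 2 * i ^ 2" using hi by algebra
    moreover have e: "1 / (1 - U) = - i" unfolding i_def by (metis minus_diff_eq divide_minus_right)
    moreover have "gg U / (B - U) = (U + 1) * i * (1 / (1 - U))" using True by (simp add: gg_def i_def)
    ultimately show "gg U / (B - U) = - (1 / (U - 1)) - 2 * (1 / (U - 1) ^ 2)"
      by (simp add: i_def power2_eq_square)
  qed
  also have "\<dots> = - (\<Sum>U\<in>rts p - {1}. 1 / (U - 1)) - 2 * (\<Sum>U\<in>rts p - {1}. 1 / (U - 1) ^ 2)"
    by (simp only: sum_subtractf sum_negf sum_distrib_left)
  also have "\<dots> = Yc (of_nat p) B"
    unfolding sum_U_minus1[OF assms(1)] sum_inv_minus1_sq[OF assms(1)] using True by (simp add: Yc_def field_simps)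
  finally show ?thesis .
next
  case False
  have B0: "B \<noteq> 0" using rts_nz[OF assms] .
  have B1: "B - 1 \<noteq> 0" using False by simp
  have "(\<Sum>U\<in>rts p - {1} - {B}. gg U / (B - U)) = (\<Sum>U\<in>rts p - {1} - {B}. 2 / (B - 1) * (1 / (U - 1)) + (B + 1) / (B - 1) * (1 / (B - U)))"
  proof (rule sum.cong[OF refl])
    fix U assume "U \<in> rts p - {1} - {B}"
    hence U1: "U - 1 \<noteq> 0" and UB: "B - U \<noteq> 0" by auto
    define i where "i = 1 / (U - 1)"
    define j where "j = 1 / (B - U)"
    define k where "k = 1 / (B - 1)"
    have hi: "i * (U - 1) = 1" using U1 by (simp add: i_def)
    have hj: "j * (B - U) = 1" using UB by (simp add: j_def)
    have hk: "k * (B - 1) = 1" using B1 by (simp add: k_def)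
    have "(U + 1) * i * j = 2 * k * i + (B + 1) * k * j" using hi hj hk by algebra
    then show "gg U / (B - U) = 2 / (B - 1) * (1 / (U - 1)) + (B + 1) / (B - 1) * (1 / (B - U))"
      by (simp add: gg_def i_def j_def k_def)
  qed
  also have "\<dots> = 2 / (B - 1) * (\<Sum>U\<in>rts p - {1} - {B}. 1 / (U - 1)) + (B + 1) / (B - 1) * (\<Sum>U\<in>rts p - {1} - {B}. 1 / (B - U))"
    by (simp only: sum.distrib sum_distrib_left)
  also have "(\<Sum>U\<in>rts p - {1} - {B}. 1 / (U - 1)) = - (of_nat p - 1) / 2 - 1 / (B - 1)"
    using sum_minus_pt[of "rts p - {1}" B "\<lambda>U. 1 / (U - 1)"] assms False sum_U_minus1[OF assms(1)] by simp
  also have "(\<Sum>U\<in>rts p - {1} - {B}. 1 / (B - U)) = (of_nat p - 1) / (2 * B) - 1 / (B - 1)"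
  proof -
    have "rts p - {1} - {B} = rts p - {B} - {1}" by auto
    then show ?thesis
      using sum_minus_pt[of "rts p - {B}" 1 "\<lambda>U. 1 / (B - U)"] assms False sum_b_minus[OF assms] by simp
  qed
  finally show ?thesis using False by (simp add: Yc_def)
qed

lemma X1_lemma:
  assumes "odd p" "odd q" "coprime p q"
  shows "(\<Sum>u\<in>rts p - {1}. gg (u ^ q) * Dq p q u) =
    (\<Sum>w\<in>rts p. cc w * (- of_nat q * w ^ (q - 1)) * Yc (of_nat p) (w ^ q))"
proof -
  have p0: "p > 0" using assms by (cases p) auto
  let ?c = "\<lambda>w. cc w * (- of_nat q * w ^ (q - 1))"
  have "(\<Sum>u\<in>rts p - {1}. gg (u ^ q) * Dq p q u) =
      (\<Sum>u\<in>rts p - {1}. \<Sum>w\<in>{w. w \<in> rts p \<and> u \<noteq> w}. ?c w * (gg (u ^ q) / (w ^ q - u ^ q)))"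
  proof (rule sum.cong[OF refl])
    fix u assume "u \<in> rts p - {1}"
    have "{w. w \<in> rts p \<and> u \<noteq> w} = rts p - {u}" by auto
    then show "gg (u ^ q) * Dq p q u = (\<Sum>w\<in>{w. w \<in> rts p \<and> u \<noteq> w}. ?c w * (gg (u ^ q) / (w ^ q - u ^ q)))"
      unfolding Dq_def by (simp add: sum_distrib_left mult_ac)
  qed
  also have "\<dots> = (\<Sum>w\<in>rts p. \<Sum>u\<in>{u. u \<in> rts p - {1} \<and> u \<noteq> w}. ?c w * (gg (u ^ q) / (w ^ q - u ^ q)))"
    by (rule sum.swap_restrict) (use p0 in auto)
  also have "\<dots> = (\<Sum>w\<in>rts p. ?c w * Yc (of_nat p) (w ^ q))"
  proof (rule sum.cong[OF refl])
    fix w assume w: "w \<in> rts p"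
    have bij: "bij_betw (\<lambda>u. u ^ q) (rts p) (rts p)" by (rule pow_perm[OF assms(3) p0])
    have inj: "inj_on (\<lambda>u. u ^ q) (rts p)" using bij by (simp add: bij_betw_def)
    have img: "(\<lambda>u. u ^ q) ` (rts p - {1, w}) = rts p - {1, w ^ q}"
    proof -
      have "(\<lambda>u. u ^ q) ` (rts p - {1, w}) = (\<lambda>u. u ^ q) ` rts p - (\<lambda>u. u ^ q) ` {1, w}"
        by (rule inj_on_image_set_diff[OF inj]) (use w in auto)
      also have "(\<lambda>u. u ^ q) ` rts p = rts p" using bij by (simp add: bij_betw_def)
      finally show ?thesis by simp
    qed
    have bij2: "bij_betw (\<lambda>u. u ^ q) (rts p - {1, w}) (rts p - {1, w ^ q})"
      by (rule bij_betw_subset[OF bij _ img]) auto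
    have "(\<Sum>u\<in>{u. u \<in> rts p - {1} \<and> u \<noteq> w}. gg (u ^ q) / (w ^ q - u ^ q)) =
        (\<Sum>u\<in>rts p - {1, w}. gg (u ^ q) / (w ^ q - u ^ q))"
      by (rule sum.cong) auto
    also have "\<dots> = (\<Sum>U\<in>rts p - {1, w ^ q}. gg U / (w ^ q - U))"
      by (rule sum.reindex_bij_betw[OF bij2])
    also have "\<dots> = (\<Sum>U\<in>rts p - {1} - {w ^ q}. gg U / (w ^ q - U))"
      by (rule sum.cong) auto
    also have "\<dots> = Yc (of_nat p) (w ^ q)"
    proof (rule Y_closed[OF p0])
      have "(w ^ q) ^ p = (w ^ p) ^ q" by (metis power_mult mult.commute)
      then show "w ^ q \<in> rts p" using w by simp
    qed
    finally have "(\<Sum>u\<in>{u. u \<in> rts p - {1} \<and> u \<noteq> w}. gg (u ^ q) / (w ^ q - u ^ q)) = Yc (of_nat p) (w ^ q)" .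
    then show "(\<Sum>u\<in>{u. u \<in> rts p - {1} \<and> u \<noteq> w}. ?c w * (gg (u ^ q) / (w ^ q - u ^ q))) = ?c w * Yc (of_nat p) (w ^ q)"
      by (simp only: sum_distrib_left[symmetric])
  qed
  finally show ?thesis .
qed



definition Gf :: "complex \<Rightarrow> complex \<Rightarrow> complex \<Rightarrow> complex \<Rightarrow> complex" where
  "Gf P Q u U = - gg U * (8 / P * (- Rf P u + cc u * (- (Q - 1) / (2 * u))) + 2 * P * (Q / (1 + U) - 1 / (u + 1)))"

definition Hf :: "complex \<Rightarrow> complex \<Rightarrow> complex \<Rightarrow> complex \<Rightarrow> complex" where
  "Hf P Q u U = cc u * (- Q * (U / u)) * Yc P U"

definition rf :: "complex \<Rightarrow> complex \<Rightarrow> complex \<Rightarrow> complex \<Rightarrow> complex" where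
  "rf P Q u U = 32 / P * (u / ((u + 1) ^ 3 * (U - 1))) - 32 * Q / P * (u / ((u + 1) ^ 2 * (U - 1) ^ 2))"

lemma PW_alg:
  fixes u U P Q a iu W iV iU iP :: complex
  assumes "a * (u + 1) = 1" "iu * u = 1" "W * (U - 1) = 1" "iV * (U + 1) = 1" "iU * U = 1" "iP * P = 1"
  shows "- ((U + 1) * W) * (8 * iP * (- ((1 - a) ^ 2 * (P - 1) * iu / 2 + (a ^ 2 - 2 * a) * (P / 2 - a) + a * (P * (2 - P) / 4 - a ^ 2))
            + u ^ 2 * a ^ 2 * (- (Q - 1) * iu / 2)) + 2 * P * (Q * iV - a))
       - 8 * iP * (u ^ 2 * a ^ 2 * (- Q * (U * iu)) * (2 * W * (- (P - 1) / 2 - W) + (U + 1) * W * ((P - 1) * iU / 2 - W)))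
       - (32 * iP * (u * a ^ 3 * W) - 32 * Q * iP * (u * a ^ 2 * W ^ 2))
     = (8 * iP * (let ub = iu in (P - 1) * ub / 2 - 2 * a * (P / 2 - a + (P - 1) * ub / 2)
           + a * (P * (2 - P) / 4 - 2 * a ^ 2 + a * P / 2 + a * (P - 1) * ub / 2))
        + 4 * (Q - 1) * iP * a * (1 - a) + 2 * P * a - 4 * Q * (P + 1) * iP * a * (1 - a))
      + (16 * iP * (let ub = iu in (P - 1) * ub / 2 - 2 * a * (P / 2 - a + (P - 1) * ub / 2)
           + a * (P * (2 - P) / 4 - 2 * a ^ 2 + a * P / 2 + a * (P - 1) * ub / 2))
        + 8 * (Q - 1) * iP * a * (1 - a) - 2 * P * Q + 4 * P * a
        - 40 * Q * iP * a * (1 - a) - 32 * iP * a ^ 2 * (1 - a)) * W"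
  using assms unfolding Let_def by algebra

lemma PW:
  assumes "P \<noteq> 0" "u \<noteq> 0" "u + 1 \<noteq> 0" "U \<noteq> 0" "U \<noteq> 1" "U + 1 \<noteq> 0"
  shows "Gf P Q u U - 8 / P * Hf P Q u U - rf P Q u U = alpha P Q (1 / (u + 1)) + beta P Q (1 / (u + 1)) * (1 / (U - 1))"
proof -
  define a where "a = 1 / (u + 1)"
  define iu where "iu = 1 / u"
  define W where "W = 1 / (U - 1)"
  define iV where "iV = 1 / (U + 1)"
  define iU where "iU = 1 / U"
  define iP where "iP = 1 / P"
  have U1: "U - 1 \<noteq> 0" using assms by simp
  have h: "a * (u + 1) = 1" "iu * u = 1" "W * (U - 1) = 1" "iV * (U + 1) = 1" "iU * U = 1" "iP * P = 1"
    using assms U1 by (simp_all add: a_def iu_def W_def iV_def iU_def iP_def)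
  have dP: "\<And>x. x / P = x * iP" by (simp add: iP_def)
  have e_gg: "gg U = (U + 1) * W" by (simp add: gg_def W_def)
  have e_cc: "cc u = u ^ 2 * a ^ 2" by (simp add: cc_def a_def power_one_over)
  have e_Rf: "Rf P u = (1 - a) ^ 2 * (P - 1) * iu / 2 + (a ^ 2 - 2 * a) * (P / 2 - a) + a * (P * (2 - P) / 4 - a ^ 2)"
    by (simp add: Rf_def a_def[symmetric] iu_def Let_def)
  have e1: "- (Q - 1) / (2 * u) = - (Q - 1) * iu / 2" by (simp add: iu_def)
  have e2: "Q / (1 + U) = Q * iV" by (simp add: iV_def add.commute)
  have e3: "U / u = U * iu" by (simp add: iu_def)
  have e_Yc: "Yc P U = 2 * W * (- (P - 1) / 2 - W) + (U + 1) * W * ((P - 1) * iU / 2 - W)"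
    using assms by (simp add: Yc_def W_def iU_def)
  have e_rf: "rf P Q u U = 32 * iP * (u * a ^ 3 * W) - 32 * Q * iP * (u * a ^ 2 * W ^ 2)"
    by (simp add: rf_def a_def W_def iP_def power_one_over)
  have e_ub: "a / (1 - a) = iu"
    unfolding a_def iu_def using assms(2,3) by (simp add: field_simps)
  have L: "Gf P Q u U - 8 / P * Hf P Q u U - rf P Q u U =
       - ((U + 1) * W) * (8 * iP * (- ((1 - a) ^ 2 * (P - 1) * iu / 2 + (a ^ 2 - 2 * a) * (P / 2 - a) + a * (P * (2 - P) / 4 - a ^ 2))
            + u ^ 2 * a ^ 2 * (- (Q - 1) * iu / 2)) + 2 * P * (Q * iV - a))
       - 8 * iP * (u ^ 2 * a ^ 2 * (- Q * (U * iu)) * (2 * W * (- (P - 1) / 2 - W) + (U + 1) * W * ((P - 1) * iU / 2 - W)))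
       - (32 * iP * (u * a ^ 3 * W) - 32 * Q * iP * (u * a ^ 2 * W ^ 2))"
    unfolding Gf_def Hf_def e_rf e_gg e_cc e_Rf e1 e2 e3 e_Yc a_def[symmetric] dP ..
  have R: "alpha P Q (1 / (u + 1)) + beta P Q (1 / (u + 1)) * (1 / (U - 1)) =
      (8 * iP * (let ub = iu in (P - 1) * ub / 2 - 2 * a * (P / 2 - a + (P - 1) * ub / 2)
           + a * (P * (2 - P) / 4 - 2 * a ^ 2 + a * P / 2 + a * (P - 1) * ub / 2))
        + 4 * (Q - 1) * iP * a * (1 - a) + 2 * P * a - 4 * Q * (P + 1) * iP * a * (1 - a))
      + (16 * iP * (let ub = iu in (P - 1) * ub / 2 - 2 * a * (P / 2 - a + (P - 1) * ub / 2)
           + a * (P * (2 - P) / 4 - 2 * a ^ 2 + a * P / 2 + a * (P - 1) * ub / 2))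
        + 8 * (Q - 1) * iP * a * (1 - a) - 2 * P * Q + 4 * P * a
        - 40 * Q * iP * a * (1 - a) - 32 * iP * a ^ 2 * (1 - a)) * W"
    unfolding alpha_def beta_def Ra_def a_def[symmetric] W_def[symmetric] e_ub dP Let_def
    by (simp only: mult.assoc)
  show ?thesis unfolding L R by (rule PW_alg[OF h])
qed



lemma sym_sum:
  assumes "odd p" "coprime p q"
  shows "(\<Sum>u\<in>rts p - {1}. alpha (of_nat p) Q (1 / (u + 1)) + beta (of_nat p) Q (1 / (u + 1)) * (1 / (u ^ q - 1)))
    = (\<Sum>u\<in>rts p - {1}. (8 * Q * (4 - of_nat p) + 16) / of_nat p * (1 / (u + 1)) * (1 - 1 / (u + 1)) + 2 * of_nat p * Q) / 2"
proof -
  have p0: "p > 0" using assms by (cases p) auto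
  let ?P = "of_nat p :: complex"
  have P0: "?P \<noteq> 0" using p0 by simp
  let ?A = "rts p - {1}"
  define f where "f u = alpha ?P Q (1 / (u + 1)) + beta ?P Q (1 / (u + 1)) * (1 / (u ^ q - 1))" for u
  have inv: "inverse u \<in> ?A" if "u \<in> ?A" for u using that by (auto simp: power_inverse)
  have S: "(\<Sum>u\<in>?A. f u) = (\<Sum>u\<in>?A. f (inverse u))"
    by (rule sum_inv_reindex[OF inv, symmetric])
  have pt: "f u + f (inverse u) = (8 * Q * (4 - ?P) + 16) / ?P * (1 / (u + 1)) * (1 - 1 / (u + 1)) + 2 * ?P * Q"
    if u: "u \<in> ?A" for u
  proof -
    have u0: "u \<noteq> 0" using rts_nz[OF p0] u by auto
    have u1: "u + 1 \<noteq> 0" using odd_rts_not_m1[OF assms(1)] u by (metis DiffE eq_neg_iff_add_eq_0)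
    have uq: "u ^ q \<noteq> 1" using rts_coprime_one[OF assms(2) p0, of u] u by auto
    have uq0: "u ^ q \<noteq> 0" using u0 by simp
    define a where "a = 1 / (u + 1)"
    have a0: "a \<noteq> 0" using u1 by (simp add: a_def)
    have a1: "a \<noteq> 1" using u0 u1 by (simp add: a_def field_simps)
    have ia: "1 / (inverse u + 1) = 1 - a" using u0 u1 by (simp add: a_def field_simps)
    have iW: "1 / (inverse u ^ q - 1) = - 1 - 1 / (u ^ q - 1)"
    proof -
      have d: "u ^ q - 1 \<noteq> 0" using uq by simp
      have "inverse u ^ q = 1 / u ^ q" by (simp add: power_inverse divide_inverse)
      then show ?thesis using d uq0 by (simp add: field_simps)
    qed
    have "f u + f (inverse u) = alpha ?P Q a + alpha ?P Q (1 - a) - beta ?P Q a"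
      unfolding f_def ia iW a_def[symmetric] beta_sym[OF P0 a0 a1] by (simp add: algebra_simps)
    also have "\<dots> = (8 * Q * (4 - ?P) + 16) / ?P * a * (1 - a) + 2 * ?P * Q"
      by (rule alpha_sym[OF P0 a0 a1])
    finally show ?thesis by (simp add: a_def)
  qed
  have "2 * (\<Sum>u\<in>?A. f u) = (\<Sum>u\<in>?A. f u + f (inverse u))"
    using S by (simp add: sum.distrib)
  also have "\<dots> = (\<Sum>u\<in>?A. (8 * Q * (4 - ?P) + 16) / ?P * (1 / (u + 1)) * (1 - 1 / (u + 1)) + 2 * ?P * Q)"
    by (rule sum.cong[OF refl]) (rule pt)
  finally have H: "2 * (\<Sum>u\<in>?A. f u) = (\<Sum>u\<in>?A. (8 * Q * (4 - ?P) + 16) / ?P * (1 / (u + 1)) * (1 - 1 / (u + 1)) + 2 * ?P * Q)" .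
  have "(\<Sum>u\<in>?A. f u) = (2 * (\<Sum>u\<in>?A. f u)) / 2" by simp
  also note H
  finally show ?thesis unfolding f_def .
qed

lemma sum_a1a:
  assumes "odd p"
  shows "(\<Sum>u\<in>rts p - {1}. 1 / (u + 1) * (1 - 1 / (u + 1))) = (of_nat p ^ 2 - 1) / 4"
proof -
  have p0: "p > 0" using assms by (cases p) auto
  have "(\<Sum>u\<in>rts p - {1}. 1 / (u + 1) * (1 - 1 / (u + 1))) = (\<Sum>u\<in>rts p - {1}. 1 / (u + 1) - 1 / (u + 1) ^ 2)"
    by (rule sum.cong[OF refl]) (simp add: algebra_simps power2_eq_square)
  also have "\<dots> = (\<Sum>u\<in>rts p - {1}. 1 / (u + 1)) - (\<Sum>u\<in>rts p - {1}. 1 / (u + 1) ^ 2)"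
    by (rule sum_subtractf)
  finally have E: "(\<Sum>u\<in>rts p - {1}. 1 / (u + 1) * (1 - 1 / (u + 1))) = (\<Sum>u\<in>rts p - {1}. 1 / (u + 1)) - (\<Sum>u\<in>rts p - {1}. 1 / (u + 1) ^ 2)" .
  have s1: "(\<Sum>u\<in>rts p - {1}. 1 / (u + 1)) = of_nat p / 2 - 1 / 2"
    using sum_minus_pt[of "rts p" 1 "\<lambda>u. 1 / (u + 1)"] p0 sum_inv_plus1[OF assms] by simp
  have s2: "(\<Sum>u\<in>rts p - {1}. 1 / (u + 1) ^ 2) = of_nat p * (2 - of_nat p) / 4 - 1 / 4"
    using sum_minus_pt[of "rts p" 1 "\<lambda>u. 1 / (u + 1) ^ 2"] p0 sum_inv_plus1_sq[OF assms] by simp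
  show ?thesis unfolding E s1 s2 by (simp add: field_simps power2_eq_square)
qed



definition Ff :: "nat \<Rightarrow> nat \<Rightarrow> complex \<Rightarrow> complex" where
  "Ff p q z = (\<i> * (z ^ q + 1) / (z ^ q - 1)) * (\<i> * (z ^ p + 1) / (z ^ p - 1)) / ((z + 1) ^ 2 / (4 * z))"

lemma Ff_eq: "Ff p q z = - gg (z ^ q) * Psi p z"
proof -
  have "Ff p q z = (\<i> * \<i>) * ((z ^ q + 1) / (z ^ q - 1)) * ((z ^ p + 1) / (z ^ p - 1) * (4 * z / (z + 1) ^ 2))"
    unfolding Ff_def by (simp only: divide_inverse inverse_mult_distrib inverse_inverse_eq mult_ac)
  also have "\<dots> = - gg (z ^ q) * Psi p z" by (simp add: gg_def Psi_def divide_inverse mult_ac)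
  finally show ?thesis .
qed

lemma crt_sum:
  assumes "coprime p q" "p > 0" "q > 0"
  shows "(\<Sum>z\<in>{z\<in>rts (p * q). z ^ q \<noteq> 1 \<and> z ^ p \<noteq> 1}. f z) = (\<Sum>u\<in>rts p - {1}. \<Sum>v\<in>rts q - {1}. f (u * v))"
proof -
  have cqp: "coprime q p" using assms(1) by (simp add: coprime_commute)
  have bij: "bij_betw (\<lambda>(u, v). u * v) (rts p \<times> rts q) (rts (p * q))" by (rule crt_bij[OF assms])
  have img: "(\<lambda>(u, v). u * v) ` ((rts p - {1}) \<times> (rts q - {1})) = {z\<in>rts (p * q). z ^ q \<noteq> 1 \<and> z ^ p \<noteq> 1}"
  proof (intro equalityI subsetI)
    fix z assume "z \<in> (\<lambda>(u, v). u * v) ` ((rts p - {1}) \<times> (rts q - {1}))"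
    then obtain x where x: "x \<in> (rts p - {1}) \<times> (rts q - {1})" "z = (\<lambda>(u, v). u * v) x" by (rule imageE)
    obtain u v where xuv: "x = (u, v)" by (cases x)
    have u: "u \<in> rts p - {1}" and v: "v \<in> rts q - {1}" and z: "z = u * v" using x xuv by auto
    then have u: "u \<in> rts p" "u \<noteq> 1" and v: "v \<in> rts q" "v \<noteq> 1" by auto
    have "(u * v) ^ (p * q) = (u ^ p) ^ q * (v ^ q) ^ p" by (metis power_mult power_mult_distrib mult.commute)
    then have "u * v \<in> rts (p * q)" using u v by simp
    moreover have "(u * v) ^ q \<noteq> 1"
      using rts_coprime_one[OF assms(1,2), of u] u v by (auto simp: power_mult_distrib)
    moreover have "(u * v) ^ p \<noteq> 1"
      using rts_coprime_one[OF cqp assms(3), of v] u v by (auto simp: power_mult_distrib)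
    ultimately show "z \<in> {z\<in>rts (p * q). z ^ q \<noteq> 1 \<and> z ^ p \<noteq> 1}" using z by simp
  next
    fix z assume z: "z \<in> {z\<in>rts (p * q). z ^ q \<noteq> 1 \<and> z ^ p \<noteq> 1}"
    then obtain u v where uv: "u \<in> rts p" "v \<in> rts q" "z = u * v"
      using bij unfolding bij_betw_def by force
    have "u \<noteq> 1" using z uv by (auto simp: power_mult_distrib)
    moreover have "v \<noteq> 1" using z uv by (auto simp: power_mult_distrib)
    ultimately show "z \<in> (\<lambda>(u, v). u * v) ` ((rts p - {1}) \<times> (rts q - {1}))" using uv by force
  qed
  have bij2: "bij_betw (\<lambda>(u, v). u * v) ((rts p - {1}) \<times> (rts q - {1})) {z\<in>rts (p * q). z ^ q \<noteq> 1 \<and> z ^ p \<noteq> 1}"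
    by (rule bij_betw_subset[OF bij _ img]) auto
  have "(\<Sum>z\<in>{z\<in>rts (p * q). z ^ q \<noteq> 1 \<and> z ^ p \<noteq> 1}. f z) = (\<Sum>x\<in>(rts p - {1}) \<times> (rts q - {1}). f (case x of (u, v) \<Rightarrow> u * v))"
    by (rule sum.reindex_bij_betw[OF bij2, symmetric])
  also have "\<dots> = (\<Sum>u\<in>rts p - {1}. \<Sum>v\<in>rts q - {1}. f (u * v))"
    by (simp add: sum.cartesian_product case_prod_unfold)
  finally show ?thesis .
qed

lemma sum_omega:
  assumes "p > 0"
  shows "(\<Sum>j=1..p-1. h (cis (2 * pi * real j / real p))) = (\<Sum>u\<in>rts p - {1}. h u)"
proof -
  have bij: "bij_betw (\<lambda>k. cis (2 * pi * real k / real p)) {..<p} (rts p)"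
    using Complex.bij_betw_roots_unity[OF assms] by (simp add: rts_def)
  have b0: "bij_betw (\<lambda>k. cis (2 * pi * real k / real p)) {0} {1}" by simp
  have "bij_betw (\<lambda>k. cis (2 * pi * real k / real p)) ({..<p} - {0}) (rts p - {1})"
    by (rule bij_betw_DiffI[OF bij b0]) (use assms in auto)
  moreover have "{..<p} - {0} = {1..p-1}" using assms by auto
  ultimately have bij2: "bij_betw (\<lambda>k. cis (2 * pi * real k / real p)) {1..p-1} (rts p - {1})" by simp
  show ?thesis by (rule sum.reindex_bij_betw[OF bij2])
qed

lemma e_pow:
  assumes "p > 0" "q > 0"
  shows "cis (2 * pi * real n / real (p * q)) ^ q = cis (2 * pi / real p) ^ n"
proof -
  have "cis (2 * pi * real n / real (p * q)) ^ q = cis (real q * (2 * pi * real n / real (p * q)))"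
    by (rule Complex.DeMoivre)
  also have "real q * (2 * pi * real n / real (p * q)) = real n * (2 * pi / real p)"
    using assms by (simp add: field_simps)
  also have "cis (real n * (2 * pi / real p)) = cis (2 * pi / real p) ^ n"
    by (rule Complex.DeMoivre[symmetric])
  finally show ?thesis .
qed

lemma e_pow_eq:
  assumes "p > 0" "q > 0"
  shows "cis (2 * pi * real n / real (p * q)) ^ q = 1 \<longleftrightarrow> p dvd n"
  using e_pow[OF assms] prim_root[OF assms(1)] by simp

lemma LHS_to_F:
  assumes "coprime p q" "p > 0" "q > 0"
  shows "complex_of_real (\<Sum>n\<in>{n. 1 \<le> n \<and> n \<le> p * q - 1 \<and> \<not> p dvd n \<and> \<not> q dvd n}.
              cot (pi * real n / real p) * cot (pi * real n / real q)
                / (cos (pi * real n / real (p * q)))\<^sup>2)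
         = (\<Sum>z\<in>{z\<in>rts (p * q). z ^ q \<noteq> 1 \<and> z ^ p \<noteq> 1}. Ff p q z)"
proof -
  define N where "N = p * q"
  have N0: "N > 0" using assms by (simp add: N_def)
  define e where "e n = cis (2 * pi * real n / real N)" for n
  let ?A = "{n. 1 \<le> n \<and> n \<le> p * q - 1 \<and> \<not> p dvd n \<and> \<not> q dvd n}"
  have eq: "e n ^ q = 1 \<longleftrightarrow> p dvd n" "e n ^ p = 1 \<longleftrightarrow> q dvd n" for n
    using e_pow_eq[OF assms(2,3), of n] e_pow_eq[OF assms(3,2), of n] by (simp_all add: e_def N_def mult.commute)
  have A: "?A = {n\<in>{..<N}. \<not> p dvd n \<and> \<not> q dvd n}"
  proof (rule set_eqI)
    fix n
    show "n \<in> ?A \<longleftrightarrow> n \<in> {n\<in>{..<N}. \<not> p dvd n \<and> \<not> q dvd n}"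
    proof (cases "n = 0")
      case True then show ?thesis by simp
    next
      case False then show ?thesis using N0 by (auto simp: N_def)
    qed
  qed
  have bij: "bij_betw e {..<N} (rts N)"
    using Complex.bij_betw_roots_unity[OF N0] by (simp add: rts_def e_def[abs_def])
  have img: "e ` ?A = {z\<in>rts N. z ^ q \<noteq> 1 \<and> z ^ p \<noteq> 1}"
  proof (intro equalityI subsetI)
    fix z assume "z \<in> e ` ?A"
    then obtain n where n: "n \<in> ?A" "z = e n" by auto
    then have "n \<in> {..<N}" using A by auto
    then have "e n \<in> rts N" using bij unfolding bij_betw_def by auto
    then show "z \<in> {z\<in>rts N. z ^ q \<noteq> 1 \<and> z ^ p \<noteq> 1}" using n eq by auto
  next
    fix z assume z: "z \<in> {z\<in>rts N. z ^ q \<noteq> 1 \<and> z ^ p \<noteq> 1}"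
    then have "z \<in> e ` {..<N}" using bij unfolding bij_betw_def by simp
    then obtain n where n: "n \<in> {..<N}" "z = e n" by blast
    then have "n \<in> ?A" using z eq A by auto
    then show "z \<in> e ` ?A" using n by auto
  qed
  have bij2: "bij_betw e ?A {z\<in>rts N. z ^ q \<noteq> 1 \<and> z ^ p \<noteq> 1}"
    by (rule bij_betw_subset[OF bij _ img]) (use N0 in \<open>auto simp: N_def\<close>)
  have pt: "complex_of_real (cot (pi * real n / real p) * cot (pi * real n / real q) / (cos (pi * real n / real (p * q)))\<^sup>2)
      = Ff p q (e n)" if n: "n \<in> ?A" for n
  proof -
    have c1: "cis (2 * (pi * real n / real p)) = e n ^ q"
      using e_pow[OF assms(2,3), of n] by (simp add: e_def N_def Complex.DeMoivre algebra_simps)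
    have c2: "cis (2 * (pi * real n / real q)) = e n ^ p"
      using e_pow[OF assms(3,2), of n] by (simp add: e_def N_def Complex.DeMoivre algebra_simps mult.commute)
    have c3: "cis (2 * (pi * real n / real (p * q))) = e n"
      by (simp add: e_def N_def algebra_simps)
    have n1: "e n ^ q \<noteq> 1" "e n ^ p \<noteq> 1" using n eq by auto
    have "complex_of_real (cot (pi * real n / real p)) = \<i> * (e n ^ q + 1) / (e n ^ q - 1)"
      using cot_cis[of "pi * real n / real p"] c1 n1 by simp
    moreover have "complex_of_real (cot (pi * real n / real q)) = \<i> * (e n ^ p + 1) / (e n ^ p - 1)"
      using cot_cis[of "pi * real n / real q"] c2 n1 by simp
    moreover have "complex_of_real ((cos (pi * real n / real (p * q)))\<^sup>2) = (e n + 1) ^ 2 / (4 * e n)"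
      using cos2_cis[of "pi * real n / real (p * q)"] c3 by simp
    ultimately show ?thesis by (simp add: Ff_def)
  qed
  have "complex_of_real (\<Sum>n\<in>?A. cot (pi * real n / real p) * cot (pi * real n / real q)
                / (cos (pi * real n / real (p * q)))\<^sup>2) = (\<Sum>n\<in>?A. Ff p q (e n))"
    by (simp only: of_real_sum pt cong: sum.cong)
  also have "\<dots> = (\<Sum>z\<in>{z\<in>rts N. z ^ q \<noteq> 1 \<and> z ^ p \<noteq> 1}. Ff p q z)"
    by (rule sum.reindex_bij_betw[OF bij2])
  finally show ?thesis by (simp add: N_def)
qed



lemma sum_K:
  assumes "odd p"
  shows "(\<Sum>u\<in>rts p - {1}. c * (1 / (u + 1)) * (1 - 1 / (u + 1)) + d) = c * ((of_nat p ^ 2 - 1) / 4) + (of_nat p - 1) * d"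
proof -
  have p0: "p > 0" using assms by (cases p) auto
  have "(\<Sum>u\<in>rts p - {1}. c * (1 / (u + 1)) * (1 - 1 / (u + 1)) + d)
      = c * (\<Sum>u\<in>rts p - {1}. 1 / (u + 1) * (1 - 1 / (u + 1))) + (\<Sum>u\<in>rts p - {1}. d)"
    by (simp only: sum.distrib sum_distrib_left mult.assoc)
  also have "(\<Sum>u\<in>rts p - {1}. d) = (of_nat p - 1) * d"
    using p0 by (simp add: card_rts of_nat_diff)
  finally show ?thesis unfolding sum_a1a[OF assms] .
qed

theorem mainTheorem13:
  fixes p q :: nat
  assumes "odd p" and "odd q" and "p \<ge> 3" and "q \<ge> 3" and "coprime p q"
  defines "\<omega> \<equiv> (\<lambda>j::nat. cis (2 * pi * real j / real p))"
  shows "complex_of_real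
           (\<Sum>n\<in>{n. 1 \<le> n \<and> n \<le> p * q - 1 \<and> \<not> p dvd n \<and> \<not> q dvd n}.
              cot (pi * real n / real p) * cot (pi * real n / real q)
                / (cos (pi * real n / real (p * q)))\<^sup>2)
       = complex_of_real (2 / (3 * real p) * (real p ^ 2 - 1) * (5 * real q + 3))
         + 32 / of_nat p * (\<Sum>j=1..p-1. \<omega> j / ((\<omega> j + 1) ^ 3 * (\<omega> j ^ q - 1)))
         - 32 * of_nat q / of_nat p * (\<Sum>j=1..p-1. \<omega> j / ((\<omega> j + 1) ^ 2 * (\<omega> j ^ q - 1) ^ 2))"
proof -
  have p0: "p > 0" and q0: "q > 0" using assms by auto
  define P where "P = (of_nat p :: complex)"
  define Q where "Q = (of_nat q :: complex)"
  have P0: "P \<noteq> 0" using p0 by (simp add: P_def)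
  let ?S = "rts p - {1}"
  have uprops: "u \<noteq> 0" "u + 1 \<noteq> 0" "u ^ q \<noteq> 0" "u ^ q \<noteq> 1" "u ^ q + 1 \<noteq> 0" if u: "u \<in> ?S" for u
  proof -
    show u0: "u \<noteq> 0" using rts_nz[OF p0] u by auto
    show "u + 1 \<noteq> 0" using odd_rts_not_m1[OF assms(1)] u by (metis DiffE eq_neg_iff_add_eq_0)
    show "u ^ q \<noteq> 0" using u0 by simp
    show "u ^ q \<noteq> 1" using rts_coprime_one[OF assms(5) p0, of u] u by auto
    show "u ^ q + 1 \<noteq> 0" using uq_neq_m1[OF assms(1), of u q] u by (metis DiffE eq_neg_iff_add_eq_0)
  qed
  have stepB: "(\<Sum>v\<in>rts q - {1}. Ff p q (u * v)) = - (8 / P) * (gg (u ^ q) * Dq p q u) + Gf P Q u (u ^ q)"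
    if u: "u \<in> ?S" for u
  proof -
    have "(\<Sum>v\<in>rts q - {1}. Ff p q (u * v)) = (\<Sum>v\<in>rts q - {1}. - gg (u ^ q) * Psi p (u * v))"
      by (rule sum.cong[OF refl]) (auto simp: Ff_eq power_mult_distrib)
    also have "\<dots> = - gg (u ^ q) * (\<Sum>v\<in>rts q - {1}. Psi p (u * v))"
      by (simp only: sum_distrib_left)
    also have "(\<Sum>v\<in>rts q - {1}. Psi p (u * v)) =
      8 / P * (Dq p q u - Rf P u + cc u * (- (Q - 1) / (2 * u))) + 2 * P * (Q / (1 + u ^ q) - 1 / (u + 1))"
      unfolding P_def Q_def by (rule Jlemma[OF assms(1,2,5)]) (use u in auto)
    finally show ?thesis by (simp add: Gf_def algebra_simps)
  qed
  have LHS: "complex_of_real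
           (\<Sum>n\<in>{n. 1 \<le> n \<and> n \<le> p * q - 1 \<and> \<not> p dvd n \<and> \<not> q dvd n}.
              cot (pi * real n / real p) * cot (pi * real n / real q)
                / (cos (pi * real n / real (p * q)))\<^sup>2)
      = 2 * Q / P * Yc P 1 + (\<Sum>u\<in>?S. Gf P Q u (u ^ q) - 8 / P * Hf P Q u (u ^ q))"
  proof -
    have "complex_of_real
           (\<Sum>n\<in>{n. 1 \<le> n \<and> n \<le> p * q - 1 \<and> \<not> p dvd n \<and> \<not> q dvd n}.
              cot (pi * real n / real p) * cot (pi * real n / real q)
                / (cos (pi * real n / real (p * q)))\<^sup>2)
        = (\<Sum>u\<in>?S. \<Sum>v\<in>rts q - {1}. Ff p q (u * v))"
      unfolding LHS_to_F[OF assms(5) p0 q0] crt_sum[OF assms(5) p0 q0] ..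
    also have "\<dots> = (\<Sum>u\<in>?S. - (8 / P) * (gg (u ^ q) * Dq p q u) + Gf P Q u (u ^ q))"
      by (rule sum.cong[OF refl]) (rule stepB)
    also have "\<dots> = - (8 / P) * (\<Sum>u\<in>?S. gg (u ^ q) * Dq p q u) + (\<Sum>u\<in>?S. Gf P Q u (u ^ q))"
      by (simp only: sum.distrib sum_distrib_left)
    also have "(\<Sum>u\<in>?S. gg (u ^ q) * Dq p q u) = (\<Sum>w\<in>rts p. cc w * (- Q * w ^ (q - 1)) * Yc P (w ^ q))"
      unfolding P_def Q_def by (rule X1_lemma[OF assms(1,2,5)])
    also have "\<dots> = cc 1 * (- Q * 1 ^ (q - 1)) * Yc P (1 ^ q) + (\<Sum>w\<in>?S. cc w * (- Q * w ^ (q - 1)) * Yc P (w ^ q))"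
      by (rule sum.remove) (use p0 in auto)
    also have "(\<Sum>w\<in>?S. cc w * (- Q * w ^ (q - 1)) * Yc P (w ^ q)) = (\<Sum>w\<in>?S. Hf P Q w (w ^ q))"
    proof (rule sum.cong[OF refl])
      fix w assume w: "w \<in> ?S"
      have "w ^ q = w * w ^ (q - 1)" using q0 by (simp add: power_eq_if)
      then have "w ^ q / w = w ^ (q - 1)" using uprops(1)[OF w] by simp
      then show "cc w * (- Q * w ^ (q - 1)) * Yc P (w ^ q) = Hf P Q w (w ^ q)" by (simp add: Hf_def)
    qed
    also have "cc 1 = 1 / 4" by (simp add: cc_def)
    finally have X: "complex_of_real
           (\<Sum>n\<in>{n. 1 \<le> n \<and> n \<le> p * q - 1 \<and> \<not> p dvd n \<and> \<not> q dvd n}.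
              cot (pi * real n / real p) * cot (pi * real n / real q)
                / (cos (pi * real n / real (p * q)))\<^sup>2)
       = - (8 / P) * (1 / 4 * (- Q * 1 ^ (q - 1)) * Yc P (1 ^ q) + (\<Sum>w\<in>?S. Hf P Q w (w ^ q))) + (\<Sum>u\<in>?S. Gf P Q u (u ^ q))" .
    have Y: "(\<Sum>u\<in>?S. Gf P Q u (u ^ q) - 8 / P * Hf P Q u (u ^ q)) = (\<Sum>u\<in>?S. Gf P Q u (u ^ q)) - 8 / P * (\<Sum>u\<in>?S. Hf P Q u (u ^ q))"
      by (simp only: sum_subtractf sum_distrib_left)
    show ?thesis unfolding X Y by (simp add: algebra_simps)
  qed
  have RHS: "32 / of_nat p * (\<Sum>j=1..p-1. \<omega> j / ((\<omega> j + 1) ^ 3 * (\<omega> j ^ q - 1)))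
         - 32 * of_nat q / of_nat p * (\<Sum>j=1..p-1. \<omega> j / ((\<omega> j + 1) ^ 2 * (\<omega> j ^ q - 1) ^ 2))
       = (\<Sum>u\<in>?S. rf P Q u (u ^ q))"
  proof -
    have A1: "(\<Sum>j=1..p-1. \<omega> j / ((\<omega> j + 1) ^ 3 * (\<omega> j ^ q - 1))) = (\<Sum>u\<in>?S. u / ((u + 1) ^ 3 * (u ^ q - 1)))"
      unfolding \<omega>_def by (rule sum_omega[OF p0])
    have A2: "(\<Sum>j=1..p-1. \<omega> j / ((\<omega> j + 1) ^ 2 * (\<omega> j ^ q - 1) ^ 2)) = (\<Sum>u\<in>?S. u / ((u + 1) ^ 2 * (u ^ q - 1) ^ 2))"
      unfolding \<omega>_def by (rule sum_omega[OF p0])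
    show ?thesis unfolding A1 A2 rf_def P_def Q_def
      by (simp only: sum_subtractf sum_distrib_left)
  qed
  have SYM: "(\<Sum>u\<in>?S. Gf P Q u (u ^ q) - 8 / P * Hf P Q u (u ^ q)) = (\<Sum>u\<in>?S. rf P Q u (u ^ q))
      + ((8 * Q * (4 - P) + 16) / P * ((P ^ 2 - 1) / 4) + (P - 1) * (2 * P * Q)) / 2"
  proof -
    have "(\<Sum>u\<in>?S. Gf P Q u (u ^ q) - 8 / P * Hf P Q u (u ^ q)) =
        (\<Sum>u\<in>?S. rf P Q u (u ^ q) + (alpha P Q (1 / (u + 1)) + beta P Q (1 / (u + 1)) * (1 / (u ^ q - 1))))"
    proof (rule sum.cong[OF refl])
      fix u assume u: "u \<in> ?S"
      have "Gf P Q u (u ^ q) - 8 / P * Hf P Q u (u ^ q) - rf P Q u (u ^ q) = alpha P Q (1 / (u + 1)) + beta P Q (1 / (u + 1)) * (1 / (u ^ q - 1))"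
        by (rule PW[OF P0]) (use uprops[OF u] in auto)
      then show "Gf P Q u (u ^ q) - 8 / P * Hf P Q u (u ^ q) = rf P Q u (u ^ q) + (alpha P Q (1 / (u + 1)) + beta P Q (1 / (u + 1)) * (1 / (u ^ q - 1)))"
        by (simp add: algebra_simps)
    qed
    also have "\<dots> = (\<Sum>u\<in>?S. rf P Q u (u ^ q)) + (\<Sum>u\<in>?S. alpha P Q (1 / (u + 1)) + beta P Q (1 / (u + 1)) * (1 / (u ^ q - 1)))"
      by (rule sum.distrib)
    also have "(\<Sum>u\<in>?S. alpha P Q (1 / (u + 1)) + beta P Q (1 / (u + 1)) * (1 / (u ^ q - 1)))
       = (\<Sum>u\<in>?S. (8 * Q * (4 - P) + 16) / P * (1 / (u + 1)) * (1 - 1 / (u + 1)) + 2 * P * Q) / 2"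
      unfolding P_def by (rule sym_sum[OF assms(1,5)])
    also have "(\<Sum>u\<in>?S. (8 * Q * (4 - P) + 16) / P * (1 / (u + 1)) * (1 - 1 / (u + 1)) + 2 * P * Q)
        = (8 * Q * (4 - P) + 16) / P * ((P ^ 2 - 1) / 4) + (P - 1) * (2 * P * Q)"
      unfolding P_def by (rule sum_K[OF assms(1)])
    finally show ?thesis .
  qed
  have FIN: "2 * Q / P * Yc P 1 + ((8 * Q * (4 - P) + 16) / P * ((P ^ 2 - 1) / 4) + (P - 1) * (2 * P * Q)) / 2
      = complex_of_real (2 / (3 * real p) * (real p ^ 2 - 1) * (5 * real q + 3))"
    using P0 by (simp add: Yc_def P_def Q_def field_simps) (simp add: algebra_simps power2_eq_square)
  show ?thesis unfolding add_diff_eq[symmetric] LHS RHS SYM FIN[symmetric] by (simp add: algebra_simps)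
qed


end
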